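(* Let $L_{n-d}$ be a linear subspace of $\mathbb{R}^n$ of codimension $d$ ($d\le n-1$) in general position with respect to one of the reflection arrangements $\mathcal{A}(A_{n-1})$, $\mathcal{A}(B_n)$, $\mathcal{A}(D_n)$. Then the number of regions of this arrangement intersected by $L_{n-d}$ equals, respectively, $$2\left(\left[{n\atop d+1}\right]+\left[{n\atop d+3}\right]+\dots\right),\quad 2\big(B(n,d+1)+B(n,d+3)+\dots\big),\quad 2\big(D(n,d+1)+D(n,d+3)+\dots\big).$$
   Context: $\mathcal{A}(A_{n-1})$ consists of the hyperplanes $x_i=x_j$ ($1\le i<j\le n$) in $\mathbb{R}^n$; $\mathcal{A}(B_n)$ of the hyperplanes $x_i=x_j$, $x_i=-x_j$ ($1\le i<j\le n$) and $x_k=0$ ($1\le k\le n$); $\mathcal{A}(D_n)$ of the hyperplanes $x_i=x_j$, $x_i=-x_j$ ($1\le i<j\le n$). Regions of an arrangement are the connected components of the complement of the union of its hyperplanes. For an arrangement $\mathcal{A}$ and $\mathcal{B}\subset\mathcal{A}$, $\mathrm{rank}(\mathcal{B})=n-\dim\bigcap_{H\in\mathcal{B}}H$. A linear subspace $L_{n-d}$ of codimension $d\le n-1$ is in general position w.r.t. $\mathcal{A}$ if for every nonempty $\mathcal{B}\subset\mathcal{A}$, $\dim\bigcap_{H\in\mathcal{B}}(H\cap L_{n-d})$ equals $n-d-\mathrm{rank}(\mathcal{B})$ if $\mathrm{rank}(\mathcal{B})\le n-d$ and $0$ otherwise. The numbers are defined by $t(t+1)\cdots(t+n-1)=\sum_k\left[{n\atop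 k}\right]t^k$, $(t+1)(t+3)\cdots(t+2n-1)=\sum_kB(n,k)t^k$, $(t+1)(t+3)\cdots(t+2n-3)(t+n-1)=\sum_kD(n,k)t^k$, all set to $0$ outside the range of exponents of the respective polynomial. *)

theory Defs
  imports "HOL-Analysis.Analysis" "HOL-Computational_Algebra.Polynomial"
begin

text \<open>Coefficient numbers, defined as in the paper via generating polynomials.
  Coefficients of a polynomial are automatically 0 outside its range of exponents.\<close>

definition stirl1 :: "nat \<Rightarrow> nat \<Rightarrow> nat" where
  "stirl1 n k = coeff (\<Prod>i<n. [:of_nat i, 1:]) k"

definition Bnum :: "nat \<Rightarrow> nat \<Rightarrow> nat" where
  "Bnum n k = coeff (\<Prod>i<n. [:2 * of_nat i + 1, 1:]) k"

definition Dnum :: "nat \<Rightarrow> nat \<Rightarrow> nat" where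
  "Dnum n k = coeff ((\<Prod>i<n - 1. [:2 * of_nat i + 1, 1:]) * [:of_nat n - 1, 1:]) k"

definition arrA :: "(real^'n) set set" where
  "arrA = {{x. x$i = x$j} | i j. i \<noteq> j}"

definition arrB :: "(real^'n) set set" where
  "arrB = {{x. x$i = x$j} | i j. i \<noteq> j} \<union> {{x. x$i = - x$j} | i j. i \<noteq> j}
          \<union> {{x. x$k = 0} | k. True}"

definition arrD :: "(real^'n) set set" where
  "arrD = {{x. x$i = x$j} | i j. i \<noteq> j} \<union> {{x. x$i = - x$j} | i j. i \<noteq> j}"

definition regions :: "(real^'n) set set \<Rightarrow> (real^'n) set set" where
  "regions A = components (UNIV - \<Union>A)"

definition arr_rank :: "(real^'n) set set \<Rightarrow> nat" where
  "arr_rank B = CARD('n) - dim (\<Inter>B)"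

definition general_position :: "(real^'n) set set \<Rightarrow> (real^'n) set \<Rightarrow> nat \<Rightarrow> bool" where
  "general_position A L d \<longleftrightarrow>
     (\<forall>B. B \<subseteq> A \<and> B \<noteq> {} \<longrightarrow>
        dim (\<Inter>H\<in>B. H \<inter> L) =
          (if arr_rank B \<le> CARD('n) - d then CARD('n) - d - arr_rank B else 0))"

definition num_regions_cut :: "(real^'n) set set \<Rightarrow> (real^'n) set \<Rightarrow> nat" where
  "num_regions_cut A L = card {C \<in> regions A. C \<inter> L \<noteq> {}}"

end

theory Submission
  imports Defs
begin


definition sv :: "('i \<Rightarrow> 'a::euclidean_space) \<Rightarrow> 'i set \<Rightarrow> 'a \<Rightarrow> ('i \<Rightarrow> real)" where
  "sv a I x = restrict (\<lambda>i. sgn (a i \<bullet> x)) I"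

definition Sx :: "('i \<Rightarrow> 'a::euclidean_space) \<Rightarrow> 'i set \<Rightarrow> 'a set \<Rightarrow> 'a set" where
  "Sx a I V = {x\<in>V. \<forall>i\<in>I. a i \<bullet> x \<noteq> 0}"

definition Kr :: "('i \<Rightarrow> 'a::euclidean_space) \<Rightarrow> 'i set \<Rightarrow> 'a set" where
  "Kr a B = {x. \<forall>i\<in>B. a i \<bullet> x = 0}"

lemma sv_finite: "finite I \<Longrightarrow> finite (sv a I ` S)"
proof -
  assume "finite I"
  have "sv a I ` S \<subseteq> PiE I (\<lambda>_. {-1,0,1})"
    by (auto simp: sv_def sgn_if split: if_splits)
  moreover have "finite (PiE I (\<lambda>_. {-1,0,1::real}))" using \<open>finite I\<close> by (simp add: finite_PiE)
  ultimately show ?thesis by (rule finite_subset)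
qed

lemma perturb:
  fixes a :: "'i \<Rightarrow> 'a::euclidean_space"
  assumes "finite I" "\<forall>i\<in>I. a i \<bullet> x \<noteq> 0"
  shows "\<exists>e>0. \<forall>\<epsilon>. 0 < \<epsilon> \<and> \<epsilon> \<le> e \<longrightarrow> (\<forall>i\<in>I. sgn (a i \<bullet> (x + \<epsilon> *\<^sub>R w)) = sgn (a i \<bullet> x))"
proof -
  define e where "e = Min (insert 1 ((\<lambda>i. \<bar>a i \<bullet> x\<bar> / (2 * (\<bar>a i \<bullet> w\<bar> + 1))) ` I))"
  have fin: "finite (insert 1 ((\<lambda>i. \<bar>a i \<bullet> x\<bar> / (2 * (\<bar>a i \<bullet> w\<bar> + 1))) ` I))" using assms by simp
  have epos: "e > 0" unfolding e_def using fin assms(2)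
    by (subst Min_gr_iff) (auto intro!: divide_pos_pos)
  have ele: "e \<le> \<bar>a i \<bullet> x\<bar> / (2 * (\<bar>a i \<bullet> w\<bar> + 1))" if "i \<in> I" for i
    unfolding e_def using fin that by (intro Min_le) auto
  show ?thesis
  proof (intro exI[of _ e] conjI allI impI ballI epos)
    fix \<epsilon> i assume h: "0 < \<epsilon> \<and> \<epsilon> \<le> e" "i \<in> I"
    have "\<epsilon> * \<bar>a i \<bullet> w\<bar> \<le> e * (\<bar>a i \<bullet> w\<bar> + 1)" using h by (intro mult_mono) auto
    also have "\<dots> \<le> \<bar>a i \<bullet> x\<bar> / (2 * (\<bar>a i \<bullet> w\<bar> + 1)) * (\<bar>a i \<bullet> w\<bar> + 1)"
      using ele[OF h(2)] by (intro mult_right_mono) auto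
    also have "\<dots> = \<bar>a i \<bullet> x\<bar> / 2" by (simp add: field_simps)
    also have "\<dots> < \<bar>a i \<bullet> x\<bar>" using assms(2) h(2) by simp
    finally have lt: "\<bar>\<epsilon> * (a i \<bullet> w)\<bar> < \<bar>a i \<bullet> x\<bar>" using h by (simp add: abs_mult)
    have "a i \<bullet> (x + \<epsilon> *\<^sub>R w) = a i \<bullet> x + \<epsilon> * (a i \<bullet> w)" by (simp add: inner_add_right)
    then show "sgn (a i \<bullet> (x + \<epsilon> *\<^sub>R w)) = sgn (a i \<bullet> x)"
      using lt by (auto simp: sgn_if abs_if split: if_splits)
  qed
qed

lemma convex_sign:
  fixes a :: "'i \<Rightarrow> 'a::euclidean_space"
  assumes "\<forall>i\<in>I. a i \<bullet> x \<noteq> 0" "\<forall>i\<in>I. sgn (a i \<bullet> y) = sgn (a i \<bullet> x)" "0 \<le> u" "0 \<le> v" "u + v = 1"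
  shows "\<forall>i\<in>I. sgn (a i \<bullet> (u *\<^sub>R x + v *\<^sub>R y)) = sgn (a i \<bullet> x)"
proof
  fix i assume i: "i \<in> I"
  have eq: "a i \<bullet> (u *\<^sub>R x + v *\<^sub>R y) = u * (a i \<bullet> x) + v * (a i \<bullet> y)" by (simp add: inner_add_right)
  consider "a i \<bullet> x > 0" "a i \<bullet> y > 0" | "a i \<bullet> x < 0" "a i \<bullet> y < 0"
    using assms(1,2) i by (fastforce simp: sgn_if split: if_splits)
  then show "sgn (a i \<bullet> (u *\<^sub>R x + v *\<^sub>R y)) = sgn (a i \<bullet> x)"
  proof cases
    case 1
    have "u * (a i \<bullet> x) + v * (a i \<bullet> y) > 0"
    proof (cases "u = 0")
      case True then show ?thesis using 1 assms by simp
    next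
      case False then show ?thesis using 1 assms by (smt (verit) mult_nonneg_nonneg mult_pos_pos)
    qed
    then show ?thesis using 1 eq by simp
  next
    case 2
    have "u * (a i \<bullet> x) + v * (a i \<bullet> y) < 0"
    proof (cases "u = 0")
      case True then show ?thesis using 2 assms by simp
    next
      case False then show ?thesis using 2 assms
        by (smt (verit) mult_nonneg_nonpos mult_pos_neg)
    qed
    then show ?thesis using 2 eq by simp
  qed
qed


lemma dim_cut:
  fixes V :: "'a::euclidean_space set"
  assumes "subspace V" "v \<in> V" "a \<bullet> v \<noteq> 0"
  shows "dim (V \<inter> {x. a \<bullet> x = 0}) + 1 = dim V"
proof -
  let ?V' = "V \<inter> {x. a \<bullet> x = 0}"
  have sV': "subspace ?V'" using assms(1) by (intro subspace_inter subspace_hyperplane)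
  have spV: "span ?V' = ?V'" by (rule span_eq_iff[THEN iffD2, OF sV'])
  have nv: "v \<notin> span ?V'" unfolding spV using assms(3) by simp
  have d1: "dim (insert v ?V') = dim ?V' + 1" using nv by (simp add: dim_insert)
  have "insert v ?V' \<subseteq> V" using assms by auto
  then have le1: "dim ?V' + 1 \<le> dim V" using d1 dim_subset by metis
  have "V \<subseteq> span (insert v ?V')"
  proof
    fix x assume x: "x \<in> V"
    define c where "c = (a \<bullet> x) / (a \<bullet> v)"
    have "x - c *\<^sub>R v \<in> ?V'" using x assms unfolding c_def
      by (auto simp: subspace_diff subspace_scale inner_diff_right)
    then have "x - c *\<^sub>R v \<in> span (insert v ?V')" by (meson span_base subsetD subset_insertI)
    moreover have "c *\<^sub>R v \<in> span (insert v ?V')" by (simp add: span_base span_scale)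
    ultimately have "(x - c *\<^sub>R v) + c *\<^sub>R v \<in> span (insert v ?V')" by (rule span_add)
    then show "x \<in> span (insert v ?V')" by simp
  qed
  then have "dim V \<le> dim (insert v ?V')" by (metis dim_span dim_subset)
  with le1 d1 show ?thesis by simp
qed

lemma sv_eqI: "\<forall>i\<in>I. sgn (a i \<bullet> y) = sgn (a i \<bullet> x) \<Longrightarrow> sv a I y = sv a I x"
  by (auto simp: sv_def restrict_def)

lemma sv_eqD: "sv a I y = sv a I x \<Longrightarrow> \<forall>i\<in>I. sgn (a i \<bullet> y) = sgn (a i \<bullet> x)"
proof
  fix i assume h: "sv a I y = sv a I x" "i \<in> I"
  have "sv a I y i = sv a I x i" using h(1) by simp
  then show "sgn (a i \<bullet> y) = sgn (a i \<bullet> x)" using h(2) by (simp add: sv_def)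
qed

lemma Sx_transfer:
  assumes "y \<in> V" "x \<in> Sx a I W" "\<forall>i\<in>I. sgn (a i \<bullet> y) = sgn (a i \<bullet> x)"
  shows "y \<in> Sx a I V"
  unfolding Sx_def
proof (intro CollectI conjI ballI)
  fix i assume i: "i \<in> I"
  show "a i \<bullet> y \<noteq> 0"
  proof
    assume y0: "a i \<bullet> y = 0"
    have "sgn (a i \<bullet> x) = sgn (a i \<bullet> y)" using assms(3) i by simp
    also have "\<dots> = 0" using y0 by simp
    finally have "sgn (a i \<bullet> x) = 0" .
    then show False using assms(2) i by (simp add: Sx_def sgn_0_0)
  qed
qed (rule assms(1))

lemma sv_insert: "sv a (insert j I) x = (sv a I x)(j := sgn (a j \<bullet> x))"
  by (auto simp: sv_def restrict_def)

lemma dr_count: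
  fixes a :: "'i \<Rightarrow> 'a::euclidean_space"
  assumes fI: "finite I" and jI: "j \<notin> I" and sV: "subspace V" and vV: "v \<in> V" and av: "a j \<bullet> v \<noteq> 0"
  shows "card (sv a (insert j I) ` Sx a (insert j I) V)
       = card (sv a I ` Sx a I V) + card (sv a I ` Sx a I (V \<inter> {x. a j \<bullet> x = 0}))"
proof -
  define Rp where "Rp = sv a I ` {x\<in>Sx a I V. a j \<bullet> x > 0}"
  define Rm where "Rm = sv a I ` {x\<in>Sx a I V. a j \<bullet> x < 0}"
  have undef: "\<tau> j = undefined" if "\<tau> \<in> sv a I ` S" for \<tau> S using that jI by (auto simp: sv_def)
  have full: "sv a (insert j I) ` Sx a (insert j I) V = (\<lambda>\<tau>. \<tau>(j:=1)) ` Rp \<union> (\<lambda>\<tau>. \<tau>(j:=-1)) ` Rm"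
  proof (rule set_eqI, rule iffI)
    fix \<sigma> assume "\<sigma> \<in> sv a (insert j I) ` Sx a (insert j I) V"
    then obtain x where x: "x \<in> Sx a (insert j I) V" "\<sigma> = sv a (insert j I) x" by auto
    then have "a j \<bullet> x > 0 \<or> a j \<bullet> x < 0" by (auto simp: Sx_def)
    then show "\<sigma> \<in> (\<lambda>\<tau>. \<tau>(j:=1)) ` Rp \<union> (\<lambda>\<tau>. \<tau>(j:=-1)) ` Rm"
      using x unfolding Rp_def Rm_def by (auto simp: sv_insert Sx_def)
  next
    fix \<sigma> assume "\<sigma> \<in> (\<lambda>\<tau>. \<tau>(j:=1)) ` Rp \<union> (\<lambda>\<tau>. \<tau>(j:=-1)) ` Rm"
    then obtain x where "x \<in> Sx a I V" "a j \<bullet> x \<noteq> 0" "\<sigma> = sv a (insert j I) x"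
      unfolding Rp_def Rm_def by (auto simp: sv_insert)
    then show "\<sigma> \<in> sv a (insert j I) ` Sx a (insert j I) V" by (auto simp: Sx_def)
  qed
  have inj: "inj_on (\<lambda>\<tau>. \<tau>(j:=c)) (sv a I ` S)" for c S
  proof (rule inj_onI)
    fix \<tau> \<tau>' assume h: "\<tau> \<in> sv a I ` S" "\<tau>' \<in> sv a I ` S" "\<tau>(j:=c) = \<tau>'(j:=c)"
    show "\<tau> = \<tau>'"
    proof
      fix k show "\<tau> k = \<tau>' k"
        using h undef[OF h(1)] undef[OF h(2)] by (metis fun_upd_apply)
    qed
  qed
  have fRp: "finite Rp" "finite Rm" unfolding Rp_def Rm_def using fI by (auto intro: sv_finite)
  have "card (sv a (insert j I) ` Sx a (insert j I) V) = card ((\<lambda>\<tau>. \<tau>(j:=1)) ` Rp) + card ((\<lambda>\<tau>. \<tau>(j:=-1)) ` Rm)"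
    unfolding full using fRp by (intro card_Un_disjoint) (auto dest!: fun_cong[of _ _ j])
  also have "\<dots> = card Rp + card Rm"
    using inj unfolding Rp_def Rm_def by (simp add: card_image)
  also have "\<dots> = card (Rp \<union> Rm) + card (Rp \<inter> Rm)" using fRp by (rule card_Un_Int)
  also have "Rp \<union> Rm = sv a I ` Sx a I V"
  proof (rule set_eqI, rule iffI)
    fix \<tau> assume "\<tau> \<in> Rp \<union> Rm" then show "\<tau> \<in> sv a I ` Sx a I V" unfolding Rp_def Rm_def by auto
  next
    fix \<tau> assume "\<tau> \<in> sv a I ` Sx a I V"
    then obtain x where x: "x \<in> Sx a I V" "\<tau> = sv a I x" by auto
    show "\<tau> \<in> Rp \<union> Rm"
    proof (cases "a j \<bullet> x = 0")
      case False then show ?thesis using x unfolding Rp_def Rm_def by (auto simp: linorder_neq_iff)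
    next
      case True
      obtain e where e: "e > 0" "\<forall>\<epsilon>. 0 < \<epsilon> \<and> \<epsilon> \<le> e \<longrightarrow> (\<forall>i\<in>I. sgn (a i \<bullet> (x + \<epsilon> *\<^sub>R v)) = sgn (a i \<bullet> x))"
        using perturb[OF fI, of a x v] x(1) by (auto simp: Sx_def)
      let ?y = "x + e *\<^sub>R v"
      have yV: "?y \<in> V" using x(1) sV vV by (auto simp: Sx_def subspace_add subspace_scale)
      have sy: "\<forall>i\<in>I. sgn (a i \<bullet> ?y) = sgn (a i \<bullet> x)" using e by auto
      have "a j \<bullet> ?y \<noteq> 0" using True av e(1) by (simp add: inner_add_right)
      then have "?y \<in> Sx a I V" "sv a I ?y = \<tau>" "a j \<bullet> ?y \<noteq> 0"
        using Sx_transfer[OF yV x(1) sy] sv_eqI[OF sy] x(2) by auto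
      then show ?thesis unfolding Rp_def Rm_def by (auto simp: linorder_neq_iff)
    qed
  qed
  also have "Rp \<inter> Rm = sv a I ` Sx a I (V \<inter> {x. a j \<bullet> x = 0})"
  proof (rule set_eqI, rule iffI)
    fix \<tau> assume "\<tau> \<in> Rp \<inter> Rm"
    then obtain x y where x: "x \<in> Sx a I V" "a j \<bullet> x > 0" "\<tau> = sv a I x"
      and y: "y \<in> Sx a I V" "a j \<bullet> y < 0" "\<tau> = sv a I y"
      unfolding Rp_def Rm_def by auto
    have sxy: "\<forall>i\<in>I. sgn (a i \<bullet> y) = sgn (a i \<bullet> x)"
    proof
      fix i assume "i \<in> I"
      from x(3) y(3) have "sv a I y i = sv a I x i" by simp
      then show "sgn (a i \<bullet> y) = sgn (a i \<bullet> x)" using \<open>i \<in> I\<close> by (simp add: sv_def)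
    qed
    define u where "u = - (a j \<bullet> y) / (a j \<bullet> x - a j \<bullet> y)"
    define w where "w = (a j \<bullet> x) / (a j \<bullet> x - a j \<bullet> y)"
    have d: "a j \<bullet> x - a j \<bullet> y \<noteq> 0" using x(2) y(2) by simp
    have uv1: "0 \<le> u" unfolding u_def using x(2) y(2) by (intro divide_nonneg_pos) auto
    have uv2: "0 \<le> w" unfolding w_def using x(2) y(2) by (intro divide_nonneg_pos) auto
    have "u + w = (- (a j \<bullet> y) + a j \<bullet> x) / (a j \<bullet> x - a j \<bullet> y)"
      unfolding u_def w_def by (simp only: add_divide_distrib)
    also have "\<dots> = 1" using d by simp
    finally have uv3: "u + w = 1" .
    note uv = uv1 uv2 uv3
    let ?z = "u *\<^sub>R x + w *\<^sub>R y"

    have "a j \<bullet> ?z = u * (a j \<bullet> x) + w * (a j \<bullet> y)" by (simp add: inner_add_right)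
    also have "\<dots> = (- (a j \<bullet> y) * (a j \<bullet> x) + (a j \<bullet> x) * (a j \<bullet> y)) / (a j \<bullet> x - a j \<bullet> y)"
      by (simp only: u_def w_def times_divide_eq_left add_divide_distrib)
    also have "\<dots> = 0" by simp
    finally have zj: "a j \<bullet> ?z = 0" .
    have zs: "\<forall>i\<in>I. sgn (a i \<bullet> ?z) = sgn (a i \<bullet> x)"
      using convex_sign[of I a x y u w] x(1) sxy uv by (auto simp: Sx_def)
    have zV: "?z \<in> V" using x(1) y(1) sV by (auto simp: Sx_def subspace_add subspace_scale)
    have "?z \<in> Sx a I (V \<inter> {x. a j \<bullet> x = 0})" "sv a I ?z = \<tau>"
      using Sx_transfer[of ?z "V \<inter> {x. a j \<bullet> x = 0}" x a I V, OF _ x(1) zs] zj zV sv_eqI[OF zs] x(3) by auto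
    then show "\<tau> \<in> sv a I ` Sx a I (V \<inter> {x. a j \<bullet> x = 0})" by blast
  next
    fix \<tau> assume "\<tau> \<in> sv a I ` Sx a I (V \<inter> {x. a j \<bullet> x = 0})"
    then obtain x where x: "x \<in> Sx a I (V \<inter> {x. a j \<bullet> x = 0})" "\<tau> = sv a I x" by auto
    obtain e where e: "e > 0" "\<forall>\<epsilon>. 0 < \<epsilon> \<and> \<epsilon> \<le> e \<longrightarrow> (\<forall>i\<in>I. sgn (a i \<bullet> (x + \<epsilon> *\<^sub>R v)) = sgn (a i \<bullet> x))"
      using perturb[OF fI, of a x v] x(1) by (auto simp: Sx_def)
    obtain e' where e': "e' > 0" "\<forall>\<epsilon>. 0 < \<epsilon> \<and> \<epsilon> \<le> e' \<longrightarrow> (\<forall>i\<in>I. sgn (a i \<bullet> (x + \<epsilon> *\<^sub>R (-v))) = sgn (a i \<bullet> x))"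
      using perturb[OF fI, of a x "-v"] x(1) by (auto simp: Sx_def)
    let ?y1 = "x + e *\<^sub>R v" and ?y2 = "x + e' *\<^sub>R (-v)"
    have xV: "x \<in> V" using x(1) by (simp add: Sx_def)
    have V: "?y1 \<in> V" "?y2 \<in> V" using xV sV vV
      by (metis subspace_add subspace_scale subspace_neg)+
    have s1: "\<forall>i\<in>I. sgn (a i \<bullet> ?y1) = sgn (a i \<bullet> x)" using e by auto
    have s2: "\<forall>i\<in>I. sgn (a i \<bullet> ?y2) = sgn (a i \<bullet> x)" using e' by auto
    have ajx: "a j \<bullet> x = 0" using x(1) by (simp add: Sx_def)
    have j1: "a j \<bullet> ?y1 = e * (a j \<bullet> v)" using ajx by (simp add: inner_add_right)
    have "a j \<bullet> ?y2 = a j \<bullet> x + e' * (a j \<bullet> (-v))" by (simp only: inner_add_right inner_scaleR_right)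
    then have j2: "a j \<bullet> ?y2 = - e' * (a j \<bullet> v)" using ajx by simp
    show "\<tau> \<in> Rp \<inter> Rm"
    proof (cases "a j \<bullet> v > 0")
      case True
      then have p: "a j \<bullet> ?y1 > 0" "a j \<bullet> ?y2 < 0" using j1 j2 e e' by auto
      have q: "sv a I ?y1 = \<tau>" "sv a I ?y2 = \<tau>" "?y1 \<in> Sx a I V" "?y2 \<in> Sx a I V"
        using sv_eqI[OF s1] sv_eqI[OF s2] x(2) Sx_transfer[OF V(1) x(1) s1] Sx_transfer[OF V(2) x(1) s2] by auto
      have "\<tau> \<in> Rp" unfolding Rp_def by (rule image_eqI[where x="?y1"]) (use p q in auto)
      moreover have "\<tau> \<in> Rm" unfolding Rm_def by (rule image_eqI[where x="?y2"]) (use p q in auto)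
      ultimately show ?thesis by blast
    next
      case False
      then have "a j \<bullet> v < 0" using av by auto
      then have p: "a j \<bullet> ?y1 < 0" "a j \<bullet> ?y2 > 0" using j1 j2 e e' by (auto simp: mult_pos_neg)
      have q: "sv a I ?y1 = \<tau>" "sv a I ?y2 = \<tau>" "?y1 \<in> Sx a I V" "?y2 \<in> Sx a I V"
        using sv_eqI[OF s1] sv_eqI[OF s2] x(2) Sx_transfer[OF V(1) x(1) s1] Sx_transfer[OF V(2) x(1) s2] by auto
      have "\<tau> \<in> Rp" unfolding Rp_def by (rule image_eqI[where x="?y2"]) (use p q in auto)
      moreover have "\<tau> \<in> Rm" unfolding Rm_def by (rule image_eqI[where x="?y1"]) (use p q in auto)
      ultimately show ?thesis by blast
    qed
  qed
  finally show ?thesis .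
qed

lemma Kr_insert: "Kr a (insert j B) = {x. a j \<bullet> x = 0} \<inter> Kr a B"
  by (auto simp: Kr_def)

lemma sum_Pow_insert:
  assumes "finite I" "j \<notin> I"
  shows "(\<Sum>B\<in>Pow (insert j I). f B) = (\<Sum>B\<in>Pow I. f B) + (\<Sum>B\<in>Pow I. f (insert j B))"
proof -
  have "(\<Sum>B\<in>Pow (insert j I). f B) = (\<Sum>B\<in>Pow I \<union> insert j ` Pow I. f B)" by (simp add: Pow_insert)
  also have "\<dots> = (\<Sum>B\<in>Pow I. f B) + (\<Sum>B\<in>insert j ` Pow I. f B)"
    using assms by (intro sum.union_disjoint) auto
  also have "(\<Sum>B\<in>insert j ` Pow I. f B) = (\<Sum>B\<in>Pow I. f (insert j B))"
    using assms by (subst sum.reindex) (auto intro!: inj_onI simp: insert_ident)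
  finally show ?thesis .
qed

lemma zaslavsky:
  fixes a :: "'i \<Rightarrow> 'a::euclidean_space"
  assumes "finite I" "subspace V"
  shows "int (card (sv a I ` Sx a I V)) = (\<Sum>B\<in>Pow I. (-1)^card B * (-1)^(dim V - dim (V \<inter> Kr a B)))"
  using assms
proof (induction I arbitrary: V rule: finite_induct)
  case empty
  have "Sx a {} V = V" by (simp add: Sx_def)
  moreover have "\<forall>x. sv a {} x = (\<lambda>_. undefined)" by (simp add: sv_def restrict_def)
  then have "sv a {} ` V = {\<lambda>_. undefined}" using subspace_0[OF empty.prems] by auto
  moreover have "Kr a {} = UNIV" by (simp add: Kr_def)
  ultimately show ?case by simp
next
  case (insert j I)
  let ?f = "\<lambda>V B. (-1::int)^card B * (-1)^(dim V - dim (V \<inter> Kr a B))"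
  have split: "(\<Sum>B\<in>Pow (insert j I). ?f V B) = (\<Sum>B\<in>Pow I. ?f V B) + (\<Sum>B\<in>Pow I. ?f V (insert j B))"
    by (rule sum_Pow_insert[OF insert(1,2)])
  have cardins: "card (insert j B) = card B + 1" if "B \<in> Pow I" for B
    using that insert(1,2) finite_subset by (auto intro: card_insert_disjoint)
  show ?case
  proof (cases "\<exists>v\<in>V. a j \<bullet> v \<noteq> 0")
    case False
    then have "Sx a (insert j I) V = {}" by (auto simp: Sx_def)
    moreover have "?f V (insert j B) = - ?f V B" if "B \<in> Pow I" for B
    proof -
      have "V \<inter> Kr a (insert j B) = V \<inter> Kr a B" using False by (auto simp: Kr_insert)
      then show ?thesis using cardins[OF that] by simp
    qed
    ultimately show ?thesis using split by (simp add: sum_negf)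
  next
    case True
    then obtain v where v: "v \<in> V" "a j \<bullet> v \<noteq> 0" by auto
    let ?V' = "V \<inter> {x. a j \<bullet> x = 0}"
    have sV': "subspace ?V'" using insert.prems by (intro subspace_inter subspace_hyperplane)
    have dV: "dim ?V' + 1 = dim V" using dim_cut[OF insert.prems v] .
    have "?f V (insert j B) = ?f ?V' B" if "B \<in> Pow I" for B
    proof -
      have eq: "V \<inter> Kr a (insert j B) = ?V' \<inter> Kr a B" by (auto simp: Kr_insert)
      have "dim (?V' \<inter> Kr a B) \<le> dim ?V'" by (rule dim_subset) auto
      then have "dim V - dim (?V' \<inter> Kr a B) = Suc (dim ?V' - dim (?V' \<inter> Kr a B))" using dV by simp
      then show ?thesis using cardins[OF that] eq by simp
    qed
    then have "(\<Sum>B\<in>Pow I. ?f V (insert j B)) = (\<Sum>B\<in>Pow I. ?f ?V' B)" by (rule sum.cong[OF refl])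
    moreover have "int (card (sv a (insert j I) ` Sx a (insert j I) V))
       = int (card (sv a I ` Sx a I V)) + int (card (sv a I ` Sx a I ?V'))"
      using dr_count[where a=a and I=I and j=j and V=V and v=v, OF insert(1,2) insert.prems v] by simp
    ultimately show ?thesis using split insert.IH[OF insert.prems] insert.IH[OF sV'] by simp
  qed
qed



definition hyp :: "'n \<Rightarrow> 'n \<Rightarrow> real \<Rightarrow> (real^'n) set" where
  "hyp i j e = {x. x$i = e * x$j}"

definition struct :: "(real^'n) set \<Rightarrow> 'n set \<Rightarrow> bool" where
  "struct W J \<longleftrightarrow> (\<forall>i. (\<forall>x\<in>W. x$i = 0) \<or> (\<exists>a\<in>J. \<exists>e. (e = 1 \<or> e = -1) \<and> (\<forall>x\<in>W. x$i = e * x$a)))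
     \<and> (\<forall>y::real^'n. \<exists>x\<in>W. \<forall>a\<in>J. x$a = y$a)"

lemma struct_UNIV: "struct UNIV UNIV"
  unfolding struct_def by (metis UNIV_I mult_1)

lemma struct_zero:
  fixes W :: "(real^'n) set"
  assumes "struct W J" "b \<in> J"
  shows "struct {x\<in>W. x$b = 0} (J - {b})"
  unfolding struct_def
proof (intro conjI allI)
  fix i
  from assms(1) have "(\<forall>x\<in>W. x$i = 0) \<or> (\<exists>a\<in>J. \<exists>e. (e = 1 \<or> e = -1) \<and> (\<forall>x\<in>W. x$i = e * x$a))"
    by (simp add: struct_def)
  then show "(\<forall>x\<in>{x\<in>W. x$b = 0}. x$i = 0) \<or>
     (\<exists>a\<in>J - {b}. \<exists>e. (e = 1 \<or> e = -1) \<and> (\<forall>x\<in>{x\<in>W. x$b = 0}. x$i = e * x$a))"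
  proof
    assume "\<forall>x\<in>W. x$i = 0" then show ?thesis by auto
  next
    assume "\<exists>a\<in>J. \<exists>e. (e = 1 \<or> e = -1) \<and> (\<forall>x\<in>W. x$i = e * x$a)"
    then obtain a e where ae: "a \<in> J" "e = 1 \<or> e = -1" "\<forall>x\<in>W. x$i = e * x$a" by auto
    show ?thesis
    proof (cases "a = b")
      case True then show ?thesis using ae by auto
    next
      case False then show ?thesis using ae by blast
    qed
  qed
next
  fix y :: "real^'n"
  define y' where "y' = ((\<chi> k. if k = b then 0 else y$k) :: real^'n)"
  obtain x where x: "x \<in> W" "\<forall>a\<in>J. x$a = y'$a" using assms(1) unfolding struct_def by blast
  then have "x$b = 0" using assms(2) by (simp add: y'_def)
  moreover have "\<forall>a\<in>J - {b}. x$a = y$a" using x by (auto simp: y'_def)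
  ultimately show "\<exists>x\<in>{x\<in>W. x$b = 0}. \<forall>a\<in>J - {b}. x$a = y$a" using x by blast
qed

lemma struct_merge:
  fixes W :: "(real^'n) set"
  assumes "struct W J" "a \<in> J" "b \<in> J" "a \<noteq> b" "c = 1 \<or> c = -1"
  shows "struct {x\<in>W. x$a = c * x$b} (J - {a})"
  unfolding struct_def
proof (intro conjI allI)
  fix i
  from assms(1) have "(\<forall>x\<in>W. x$i = 0) \<or> (\<exists>a\<in>J. \<exists>e. (e = 1 \<or> e = -1) \<and> (\<forall>x\<in>W. x$i = e * x$a))"
    by (simp add: struct_def)
  then show "(\<forall>x\<in>{x\<in>W. x$a = c * x$b}. x$i = 0) \<or>
     (\<exists>a'\<in>J - {a}. \<exists>e. (e = 1 \<or> e = -1) \<and> (\<forall>x\<in>{x\<in>W. x$a = c * x$b}. x$i = e * x$a'))"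
  proof
    assume "\<forall>x\<in>W. x$i = 0" then show ?thesis by auto
  next
    assume "\<exists>a\<in>J. \<exists>e. (e = 1 \<or> e = -1) \<and> (\<forall>x\<in>W. x$i = e * x$a)"
    then obtain a' e where ae: "a' \<in> J" "e = 1 \<or> e = -1" "\<forall>x\<in>W. x$i = e * x$a'" by auto
    show ?thesis
    proof (cases "a' = a")
      case True
      have "e * c = 1 \<or> e * c = -1" using ae(2) assms(5) by auto
      moreover have "\<forall>x\<in>{x\<in>W. x$a = c * x$b}. x$i = (e * c) * x$b" using ae True by auto
      ultimately show ?thesis using assms(3,4) by blast
    next
      case False then show ?thesis using ae by blast
    qed
  qed
next
  fix y :: "real^'n"
  define y' where "y' = ((\<chi> k. if k = a then c * y$b else y$k) :: real^'n)"
  obtain x where x: "x \<in> W" "\<forall>a\<in>J. x$a = y'$a" using assms(1) unfolding struct_def by blast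
  then have "x$a = c * x$b" using assms(2,3,4) by (simp add: y'_def)
  moreover have "\<forall>a'\<in>J - {a}. x$a' = y$a'" using x by (auto simp: y'_def)
  ultimately show "\<exists>x\<in>{x\<in>W. x$a = c * x$b}. \<forall>a'\<in>J - {a}. x$a' = y$a'" using x by blast
qed

lemma struct_hyp:
  assumes "struct W J" "e = 1 \<or> e = -1"
  shows "\<exists>J'. struct (W \<inter> hyp i j e) J'"
proof -
  have sq: "\<And>u::real. (u = 1 \<or> u = -1) \<Longrightarrow> u * u = 1" by auto
  from assms(1) have di: "(\<forall>x\<in>W. x$i = 0) \<or> (\<exists>a\<in>J. \<exists>e. (e = 1 \<or> e = -1) \<and> (\<forall>x\<in>W. x$i = e * x$a))"
    and dj: "(\<forall>x\<in>W. x$j = 0) \<or> (\<exists>a\<in>J. \<exists>e. (e = 1 \<or> e = -1) \<and> (\<forall>x\<in>W. x$j = e * x$a))"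
    by (simp_all add: struct_def)
  show ?thesis
  proof (cases "\<forall>x\<in>W. x$i = 0")
    case Zi: True
    show ?thesis
    proof (cases "\<forall>x\<in>W. x$j = 0")
      case True
      then have "W \<inter> hyp i j e = W" using Zi by (auto simp: hyp_def)
      then show ?thesis using assms(1) by auto
    next
      case False
      then obtain b ej where b: "b \<in> J" "ej = 1 \<or> ej = -1" "\<forall>x\<in>W. x$j = ej * x$b" using dj by auto
      have "W \<inter> hyp i j e = {x\<in>W. x$b = 0}" using Zi b assms(2) by (auto simp: hyp_def)
      then show ?thesis using struct_zero[OF assms(1) b(1)] by auto
    qed
  next
    case False
    then obtain a ei where a: "a \<in> J" "ei = 1 \<or> ei = -1" "\<forall>x\<in>W. x$i = ei * x$a" using di by auto
    show ?thesis
    proof (cases "\<forall>x\<in>W. x$j = 0")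
      case True
      have "W \<inter> hyp i j e = {x\<in>W. x$a = 0}" using True a by (auto simp: hyp_def)
      then show ?thesis using struct_zero[OF assms(1) a(1)] by auto
    next
      case False
      then obtain b ej where b: "b \<in> J" "ej = 1 \<or> ej = -1" "\<forall>x\<in>W. x$j = ej * x$b" using dj by auto
      have hx: "x \<in> hyp i j e \<longleftrightarrow> x$a = (ei * e * ej) * x$b" if "x \<in> W" for x
      proof -
        have "x \<in> hyp i j e \<longleftrightarrow> ei * x$a = e * (ej * x$b)" using that a b by (simp add: hyp_def)
        also have "\<dots> \<longleftrightarrow> ei * (ei * x$a) = ei * (e * (ej * x$b))" using a(2) by auto
        also have "\<dots> \<longleftrightarrow> x$a = (ei * e * ej) * x$b" using sq[OF a(2)] by (simp add: mult.assoc[symmetric])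
        finally show ?thesis .
      qed
      have c: "ei * e * ej = 1 \<or> ei * e * ej = -1" using a(2) b(2) assms(2) by auto
      show ?thesis
      proof (cases "a = b")
        case False
        have "W \<inter> hyp i j e = {x\<in>W. x$a = (ei * e * ej) * x$b}" using hx by auto
        then show ?thesis using struct_merge[OF assms(1) a(1) b(1) False c] by auto
      next
        case True
        show ?thesis
        proof (cases "ei * e * ej = 1")
          case True
          have "W \<inter> hyp i j e = W" using hx True \<open>a = b\<close> by auto
          then show ?thesis using assms(1) by auto
        next
          case False
          then have "ei * e * ej = -1" using c by auto
          then have "W \<inter> hyp i j e = {x\<in>W. x$a = 0}" using hx \<open>a = b\<close> by auto
          then show ?thesis using struct_zero[OF assms(1) a(1)] by auto
        qed
      qed
    qed
  qed
qed

definition shyps :: "(real^'n) set set" where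
  "shyps = {hyp i j e | i j e. e = 1 \<or> e = -1}"

lemma struct_Inter:
  assumes "finite B" "B \<subseteq> shyps"
  shows "\<exists>J. struct (\<Inter>B) J"
  using assms
proof (induction B rule: finite_induct)
  case empty then show ?case using struct_UNIV by auto
next
  case (insert H B)
  then obtain J where J: "struct (\<Inter>B) J" by auto
  from insert(4) obtain i j e where H: "H = hyp i j e" "e = 1 \<or> e = -1" by (auto simp: shyps_def)
  have "\<Inter>(insert H B) = \<Inter>B \<inter> hyp i j e" using H by auto
  then show ?case using struct_hyp[OF J H(2)] by metis
qed

lemma struct_inj:
  assumes "struct W J" "x \<in> W" "y \<in> W" "\<forall>a\<in>J. x$a = y$a"
  shows "x = y"
proof (rule vec_eq_iff[THEN iffD2], rule allI)
  fix i
  from assms(1) have "(\<forall>x\<in>W. x$i = 0) \<or> (\<exists>a\<in>J. \<exists>e. (e = 1 \<or> e = -1) \<and> (\<forall>x\<in>W. x$i = e * x$a))"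
    by (simp add: struct_def)
  then show "x$i = y$i" using assms(2-4) by metis
qed

lemma struct_dim:
  fixes W :: "(real^'n) set"
  assumes "struct W J" "subspace W"
  shows "dim W = card J"
proof -
  define f where "f = (\<lambda>x::real^'n. ((\<chi> k. if k \<in> J then x$k else 0) :: real^'n))"
  have lin: "linear f" unfolding f_def by (auto simp: linear_iff vec_eq_iff)
  have inj: "inj_on f (span W)" unfolding span_eq_iff[THEN iffD2, OF assms(2)]
  proof (rule inj_onI)
    fix x y assume h: "x \<in> W" "y \<in> W" "f x = f y"
    have "\<forall>a\<in>J. x$a = y$a"
    proof
      fix a assume "a \<in> J"
      then show "x$a = y$a" using arg_cong[OF h(3), of "\<lambda>z. z$a"] by (simp add: f_def)
    qed
    then show "x = y" using struct_inj[OF assms(1) h(1,2)] by simp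
  qed
  have img: "f ` W = {y. \<forall>k. k \<notin> J \<longrightarrow> y$k = 0}"
  proof (rule set_eqI, rule iffI)
    fix y :: "real^'n" assume "y \<in> f ` W" then show "y \<in> {y. \<forall>k. k \<notin> J \<longrightarrow> y$k = 0}" by (auto simp: f_def)
  next
    fix y :: "real^'n" assume y: "y \<in> {y. \<forall>k. k \<notin> J \<longrightarrow> y$k = 0}"
    obtain x where "x \<in> W" "\<forall>a\<in>J. x$a = y$a" using assms(1) unfolding struct_def by blast
    moreover have "f x = y" using y calculation by (auto simp: f_def vec_eq_iff)
    ultimately show "y \<in> f ` W" by blast
  qed
  have "dim W = dim (f ` W)" using eucl.dim_image_eq[OF lin inj] by simp
  also have "\<dots> = card J"
  proof -
    have "vec.dim {x::real^'n. \<forall>i. i \<notin> J \<longrightarrow> x$i = 0} = card J" by (rule dim_substandard_cart)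
    then show ?thesis unfolding img dim_vec_eq .
  qed
  finally show ?thesis .
qed

lemma struct_card:
  fixes G :: "real set" and W :: "(real^'n) set"
  assumes "struct W J" "finite G" "0 \<in> G" "\<And>g. g \<in> G \<Longrightarrow> -g \<in> G"
  shows "card (W \<inter> {x. \<forall>k. x$k \<in> G}) = card G ^ card J"
proof -
  have "bij_betw (\<lambda>x. restrict (\<lambda>k. x$k) J) (W \<inter> {x. \<forall>k. x$k \<in> G}) (PiE J (\<lambda>_. G))"
    unfolding bij_betw_def
  proof
    show "inj_on (\<lambda>x. restrict (\<lambda>k. x$k) J) (W \<inter> {x. \<forall>k. x$k \<in> G})"
    proof (rule inj_onI)
      fix x y assume h: "x \<in> W \<inter> {x. \<forall>k. x$k \<in> G}" "y \<in> W \<inter> {x. \<forall>k. x$k \<in> G}"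
        "restrict (\<lambda>k. x$k) J = restrict (\<lambda>k. y$k) J"
      have "\<forall>a\<in>J. x$a = y$a"
      proof
        fix a assume "a \<in> J"
        then show "x$a = y$a" using fun_cong[OF h(3), of a] by simp
      qed
      then show "x = y" using struct_inj[OF assms(1)] h by auto
    qed
  next
    show "(\<lambda>x. restrict (\<lambda>k. x$k) J) ` (W \<inter> {x. \<forall>k. x$k \<in> G}) = PiE J (\<lambda>_. G)"
    proof (rule set_eqI, rule iffI)
      fix g assume "g \<in> (\<lambda>x. restrict (\<lambda>k. x$k) J) ` (W \<inter> {x. \<forall>k. x$k \<in> G})"
      then show "g \<in> PiE J (\<lambda>_. G)" by auto
    next
      fix g assume g: "g \<in> PiE J (\<lambda>_. G)"
      have "\<exists>x\<in>W. \<forall>a\<in>J. x$a = ((\<chi> k. g k) :: real^'n)$a" using assms(1) unfolding struct_def by blast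
      then obtain x where x: "x \<in> W" "\<forall>a\<in>J. x$a = g a" by auto
      have "x$k \<in> G" for k
      proof -
        from assms(1) have "(\<forall>x\<in>W. x$k = 0) \<or> (\<exists>a\<in>J. \<exists>e. (e = 1 \<or> e = -1) \<and> (\<forall>x\<in>W. x$k = e * x$a))"
          by (simp add: struct_def)
        then show ?thesis
        proof
          assume "\<forall>x\<in>W. x$k = 0" then show ?thesis using x assms(3) by auto
        next
          assume "\<exists>a\<in>J. \<exists>e. (e = 1 \<or> e = -1) \<and> (\<forall>x\<in>W. x$k = e * x$a)"
          then obtain a e where ae: "a \<in> J" "e = 1 \<or> e = -1" "\<forall>x\<in>W. x$k = e * x$a" by auto
          have "x$a \<in> G" using x ae g by auto
          then show ?thesis using ae x assms(4) by auto
        qed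
      qed
      moreover have "restrict (\<lambda>k. x$k) J = g" using x g by (auto simp: PiE_def extensional_def)
      ultimately show "g \<in> (\<lambda>x. restrict (\<lambda>k. x$k) J) ` (W \<inter> {x. \<forall>k. x$k \<in> G})" using x by blast
    qed
  qed
  then have "card (W \<inter> {x. \<forall>k. x$k \<in> G}) = card (PiE J (\<lambda>_. G))" by (rule bij_betw_same_card)
  also have "\<dots> = card G ^ card J" by (simp add: card_PiE)
  finally show ?thesis .
qed



lemma incl_excl:
  assumes "finite A" "finite X"
  shows "(\<Sum>B\<in>Pow A. (-1::int)^card B * int (card (X \<inter> \<Inter>B))) = int (card (X - \<Union>A))"
  using assms(1) assms(2)
proof (induction A arbitrary: X rule: finite_induct)
  case empty then show ?case by simp
next
  case (insert H A)
  have split: "(\<Sum>B\<in>Pow (insert H A). (-1::int)^card B * int (card (X \<inter> \<Inter>B)))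
    = (\<Sum>B\<in>Pow A. (-1::int)^card B * int (card (X \<inter> \<Inter>B))) + (\<Sum>B\<in>Pow A. (-1::int)^card (insert H B) * int (card (X \<inter> \<Inter>(insert H B))))"
  proof -
    have "(\<Sum>B\<in>Pow (insert H A). (-1::int)^card B * int (card (X \<inter> \<Inter>B)))
       = (\<Sum>B\<in>Pow A \<union> insert H ` Pow A. (-1::int)^card B * int (card (X \<inter> \<Inter>B)))" by (simp add: Pow_insert)
    also have "\<dots> = (\<Sum>B\<in>Pow A. (-1::int)^card B * int (card (X \<inter> \<Inter>B))) + (\<Sum>B\<in>insert H ` Pow A. (-1::int)^card B * int (card (X \<inter> \<Inter>B)))"
      using insert by (intro sum.union_disjoint) auto
    also have "(\<Sum>B\<in>insert H ` Pow A. (-1::int)^card B * int (card (X \<inter> \<Inter>B))) = (\<Sum>B\<in>Pow A. (-1::int)^card (insert H B) * int (card (X \<inter> \<Inter>(insert H B))))"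
      using insert(1,2) by (subst sum.reindex) (auto intro!: inj_onI simp: insert_ident)
    finally show ?thesis .
  qed
  have "(\<Sum>B\<in>Pow A. (-1::int)^card (insert H B) * int (card (X \<inter> \<Inter>(insert H B))))
      = - (\<Sum>B\<in>Pow A. (-1::int)^card B * int (card ((X \<inter> H) \<inter> \<Inter>B)))"
  proof -
    have "(-1::int)^card (insert H B) * int (card (X \<inter> \<Inter>(insert H B))) = - ((-1::int)^card B * int (card ((X \<inter> H) \<inter> \<Inter>B)))"
      if "B \<in> Pow A" for B
    proof -
      have "card (insert H B) = Suc (card B)" using that insert(1,2) finite_subset by (auto intro: card_insert_disjoint)
      moreover have "X \<inter> \<Inter>(insert H B) = (X \<inter> H) \<inter> \<Inter>B" by auto
      ultimately show ?thesis by simp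
    qed
    then show ?thesis by (simp add: sum_negf)
  qed
  moreover have "int (card (X - \<Union>A)) - int (card ((X \<inter> H) - \<Union>A)) = int (card (X - \<Union>(insert H A)))"
  proof -
    have "X - \<Union>A = (X - \<Union>(insert H A)) \<union> ((X \<inter> H) - \<Union>A)" by auto
    moreover have "card ((X - \<Union>(insert H A)) \<union> ((X \<inter> H) - \<Union>A)) = card (X - \<Union>(insert H A)) + card ((X \<inter> H) - \<Union>A)"
      using insert.prems by (intro card_Un_disjoint) auto
    ultimately show ?thesis by simp
  qed
  ultimately show ?case using split insert.IH[OF insert.prems] insert.IH[of "X \<inter> H"] insert.prems by simp
qed

definition Fset :: "'k set \<Rightarrow> real set \<Rightarrow> (real \<Rightarrow> real set) \<Rightarrow> ('k \<Rightarrow> real) set" where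
  "Fset K G0 E = {f \<in> PiE K (\<lambda>_. G0). \<forall>k\<in>K. \<forall>k'\<in>K. k \<noteq> k' \<longrightarrow> f k' \<notin> E (f k)}"

locale excl =
  fixes G0 :: "real set" and E :: "real \<Rightarrow> real set" and m :: nat
  assumes finG: "finite G0"
    and Esub: "\<And>w. w \<in> G0 \<Longrightarrow> E w \<subseteq> G0"
    and Ecard: "\<And>w. w \<in> G0 \<Longrightarrow> card (E w) = m"
    and Esym: "\<And>w w'. w \<in> G0 \<Longrightarrow> w' \<in> G0 \<Longrightarrow> w' \<in> E w \<longleftrightarrow> w \<in> E w'"
    and Edisj: "\<And>w w'. w \<in> G0 \<Longrightarrow> w' \<in> G0 \<Longrightarrow> w' \<notin> E w \<Longrightarrow> E w \<inter> E w' = {}"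
begin

lemma Fset_insert_card:
  assumes "finite K" "k \<notin> K"
  shows "card (Fset (insert k K) G0 E) = card (Fset K G0 E) * (card G0 - m * card K)"
proof -
  define allowed where "allowed f = G0 - (\<Union>k'\<in>K. E (f k'))" for f
  have cardal: "card (allowed f) = card G0 - m * card K" if f: "f \<in> Fset K G0 E" for f
  proof -
    have fG: "f k' \<in> G0" if "k' \<in> K" for k' using f that by (auto simp: Fset_def)
    have "card (\<Union>k'\<in>K. E (f k')) = (\<Sum>k'\<in>K. card (E (f k')))"
    proof (rule card_UN_disjoint[OF assms(1)])
      show "\<forall>i\<in>K. finite (E (f i))" using Esub fG finG finite_subset by blast
      show "\<forall>i\<in>K. \<forall>j\<in>K. i \<noteq> j \<longrightarrow> E (f i) \<inter> E (f j) = {}"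
        using f fG Edisj by (auto simp: Fset_def)
    qed
    also have "\<dots> = m * card K" using Ecard fG by simp
    finally have "card (\<Union>k'\<in>K. E (f k')) = m * card K" .
    moreover have "(\<Union>k'\<in>K. E (f k')) \<subseteq> G0" using Esub fG by auto
    ultimately show ?thesis unfolding allowed_def using finG by (simp add: card_Diff_subset finite_subset)
  qed
  have eq: "Fset (insert k K) G0 E = (\<lambda>(f, v). f(k := v)) ` Sigma (Fset K G0 E) allowed"
  proof (rule set_eqI, rule iffI)
    fix g assume g: "g \<in> Fset (insert k K) G0 E"
    let ?f = "g(k := undefined)"
    have "?f \<in> Fset K G0 E" using g assms(2) by (auto simp: Fset_def PiE_def extensional_def)
    moreover have "g k \<in> allowed ?f"
    proof -
      have "g k \<in> G0" using g by (auto simp: Fset_def)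
      moreover have "g k \<notin> E (g k')" if "k' \<in> K" for k'
        using g that assms(2) by (auto simp: Fset_def)
      ultimately show ?thesis using assms(2) by (auto simp: allowed_def)
    qed
    moreover have "g = ?f(k := g k)" by simp
    ultimately show "g \<in> (\<lambda>(f, v). f(k := v)) ` Sigma (Fset K G0 E) allowed"
      by (intro rev_image_eqI[of "(?f, g k)"]) auto
  next
    fix g assume "g \<in> (\<lambda>(f, v). f(k := v)) ` Sigma (Fset K G0 E) allowed"
    then obtain f v where fv: "f \<in> Fset K G0 E" "v \<in> allowed f" "g = f(k := v)" by auto
    have fG: "f k' \<in> G0" if "k' \<in> K" for k' using fv that by (auto simp: Fset_def)
    have vG: "v \<in> G0" and vE: "\<And>k'. k' \<in> K \<Longrightarrow> v \<notin> E (f k')" using fv(2) by (auto simp: allowed_def)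
    have vE2: "f k' \<notin> E v" if "k' \<in> K" for k' using Esym[OF fG[OF that] vG] vE[OF that] by auto
    show "g \<in> Fset (insert k K) G0 E"
      using fv(1) vG vE vE2 assms(2) unfolding fv(3) Fset_def
      by (auto simp: PiE_def extensional_def)
  qed
  have inj: "inj_on (\<lambda>(f, v). f(k := v)) (Sigma (Fset K G0 E) allowed)"
  proof (rule inj_onI, clarify)
    fix f v f' v' assume h: "f \<in> Fset K G0 E" "f' \<in> Fset K G0 E" "f(k := v) = f'(k := v')"
    have "f k = undefined" "f' k = undefined" using h(1,2) assms(2) by (auto simp: Fset_def PiE_def extensional_def)
    then show "f = f' \<and> v = v'" using h(3) by (metis fun_upd_idem_iff fun_upd_upd fun_upd_same)
  qed
  have finF: "finite (Fset K G0 E)"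
    by (rule finite_subset[of _ "PiE K (\<lambda>_. G0)"]) (auto simp: Fset_def intro: finite_PiE assms(1) finG)
  have "card (Fset (insert k K) G0 E) = card (Sigma (Fset K G0 E) allowed)"
    unfolding eq using inj by (rule card_image)
  also have "\<dots> = (\<Sum>f\<in>Fset K G0 E. card (allowed f))"
    using finF finG by (intro card_SigmaI) (auto simp: allowed_def)
  also have "\<dots> = card (Fset K G0 E) * (card G0 - m * card K)" using cardal by simp
  finally show ?thesis .
qed

lemma Fset_card:
  assumes "finite K"
  shows "card (Fset K G0 E) = (\<Prod>i<card K. card G0 - m * i)"
  using assms
proof (induction K rule: finite_induct)
  case empty
  have e: "Fset {} G0 E = {\<lambda>_. undefined}" by (auto simp: Fset_def)
  show ?case by (subst e) simp
next
  case (insert k K)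
  then show ?case by (simp add: Fset_insert_card mult.commute)
qed

end



lemma poly_bound:
  fixes p :: "'a::comm_semiring_1 poly"
  assumes "degree p \<le> N"
  shows "poly p x = (\<Sum>i\<le>N. coeff p i * x^i)"
proof -
  have "poly p x = (\<Sum>i\<le>degree p. coeff p i * x^i)" by (rule poly_altdef)
  also have "\<dots> = (\<Sum>i\<le>N. coeff p i * x^i)"
    using assms by (intro sum.mono_neutral_left) (auto simp: coeff_eq_0)
  finally show ?thesis .
qed

lemma poly_eqI_inj:
  fixes p q :: "int poly" and f :: "nat \<Rightarrow> int"
  assumes "inj f" "\<And>s. poly p (f s) = poly q (f s)"
  shows "p = q"
proof (rule ccontr)
  assume "p \<noteq> q"
  then have "p - q \<noteq> 0" by simp
  then have "finite {x. poly (p - q) x = 0}" by (rule poly_roots_finite)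
  moreover have "range f \<subseteq> {x. poly (p - q) x = 0}" using assms(2) by auto
  ultimately have "finite (range f)" by (rule finite_subset[rotated])
  then show False using assms(1) finite_imageD by (metis infinite_UNIV_nat)
qed

lemma natint_coeff:
  fixes P :: "nat poly" and Pi :: "int poly"
  assumes "\<And>x::nat. int (poly P x) = poly Pi (int x)"
  shows "coeff Pi k = int (coeff P k)"
proof -
  define M where "M = (\<Sum>i\<le>degree P. monom (int (coeff P i)) i)"
  have "poly M (int x) = int (poly P x)" for x
    unfolding M_def poly_altdef[of P] by (simp add: poly_sum poly_monom)
  then have "M = Pi" using assms by (intro poly_eqI_inj[of int]) (auto simp: inj_def)
  moreover have "coeff M k = int (coeff P k)"
    unfolding M_def by (auto simp: coeff_sum coeff_monom coeff_eq_0)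
  ultimately show ?thesis by simp
qed

lemma coeff_sum_monom:
  "coeff (\<Sum>B\<in>S. monom (h B) (g B)) k = (\<Sum>B\<in>S. if g B = k then h B else 0)"
  by (simp add: coeff_sum coeff_monom)


lemma arith_final:
  fixes c :: "nat \<Rightarrow> int"
  assumes "d \<le> n" "(\<Sum>k\<le>n. (-1)^k * c k) = 0"
  shows "(\<Sum>k\<le>n. (-1)^(n+k) * c k * (-1)^min (n-k) (n-d))
       = 2 * (\<Sum>k | k \<le> n \<and> d < k \<and> odd (k - d). c k)"
proof -
  have t: "(-1::int)^(n+k) * c k * (-1)^min (n-k) (n-d) = (if d \<le> k then c k else (-1)^(k+d) * c k)"
    if "k \<le> n" for k
  proof (cases "d \<le> k")
    case True
    then have m: "min (n-k) (n-d) = n - k" by simp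
    have "(-1::int)^(n+k) * (-1)^(n-k) = (-1)^(n + k + (n - k))" by (simp only: power_add)
    also have "n + k + (n - k) = 2 * n" using that by simp
    also have "(-1::int)^(2 * n) = 1" by (simp only: power_mult) simp
    finally have "(-1::int)^(n+k) * (-1)^(n-k) = 1" .
    then show ?thesis using True m by (simp add: mult_ac)
  next
    case False
    then have m: "min (n-k) (n-d) = n - d" by simp
    have "(-1::int)^(n+k) * (-1)^(n-d) = (-1)^(n + k + (n - d))" by (simp only: power_add)
    also have "n + k + (n - d) = 2 * (n - d) + (k + d)" using that False assms(1) by simp
    also have "(-1::int)^(2 * (n - d) + (k + d)) = (-1)^(k+d)" by (simp only: power_add power_mult) simp
    finally have "(-1::int)^(n+k) * (-1)^(n-d) = (-1)^(k+d)" .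
    then show ?thesis using False m by (simp add: mult_ac)
  qed
  have h0: "(\<Sum>k\<le>n. (-1)^(k+d) * c k) = 0"
  proof -
    have "(\<Sum>k\<le>n. (-1)^(k+d) * c k) = (-1)^d * (\<Sum>k\<le>n. (-1)^k * c k)"
      by (simp add: sum_distrib_left power_add mult_ac)
    then show ?thesis using assms(2) by simp
  qed
  have U: "{..n} = {..<d} \<union> {d..n}" using assms(1) by auto
  have "(\<Sum>k\<le>n. (-1)^(n+k) * c k * (-1)^min (n-k) (n-d)) = (\<Sum>k\<le>n. if d \<le> k then c k else (-1)^(k+d) * c k)"
    using t by simp
  also have "\<dots> = (\<Sum>k<d. (-1)^(k+d) * c k) + (\<Sum>k=d..n. c k)"
    unfolding U by (subst sum.union_disjoint) auto
  also have "(\<Sum>k<d. (-1)^(k+d) * c k) = - (\<Sum>k=d..n. (-1)^(k+d) * c k)"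
    using h0 unfolding U by (subst (asm) sum.union_disjoint) auto
  finally have "(\<Sum>k\<le>n. (-1)^(n+k) * c k * (-1)^min (n-k) (n-d)) = (\<Sum>k=d..n. (1 - (-1)^(k+d)) * c k)"
    by (simp add: sum_subtractf algebra_simps)
  also have "\<dots> = (\<Sum>k=d..n. if odd (k - d) then 2 * c k else 0)"
  proof (rule sum.cong[OF refl])
    fix k assume "k \<in> {d..n}"
    then have e: "k + d = (k - d) + 2 * d" by auto
    have "(-1::int)^(k+d) = (-1)^((k - d) + 2 * d)" by (subst e) (rule refl)
    also have "\<dots> = (-1)^(k-d)" by (simp only: power_add power_mult) simp
    finally have "(-1::int)^(k+d) = (-1)^(k-d)" .
    then show "(1 - (-1)^(k+d)) * c k = (if odd (k - d) then 2 * c k else 0)" by auto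
  qed
  also have "\<dots> = (\<Sum>k\<in>{k. k \<le> n \<and> d < k \<and> odd (k - d)}. 2 * c k)"
  proof -
    have "(\<Sum>k=d..n. if odd (k - d) then 2 * c k else 0) = (\<Sum>k\<in>{k\<in>{d..n}. odd (k - d)}. 2 * c k)"
      by (rule sum.inter_filter[symmetric]) simp
    also have "{k\<in>{d..n}. odd (k - d)} = {k. k \<le> n \<and> d < k \<and> odd (k - d)}"
      by (auto simp: le_less)
    finally show ?thesis .
  qed
  finally show ?thesis by (simp add: sum_distrib_left)
qed


lemma cell_convex:
  fixes a :: "'i \<Rightarrow> 'a::euclidean_space"
  assumes "x \<in> Sx a I UNIV"
  shows "convex {y. sv a I y = sv a I x}"
  unfolding convex_def
proof (intro ballI allI impI)
  fix y z :: 'a and u v :: real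
  assume y: "y \<in> {y. sv a I y = sv a I x}" and z: "z \<in> {y. sv a I y = sv a I x}" and uv: "0 \<le> u" "0 \<le> v" "u + v = 1"
  have sy: "\<forall>i\<in>I. sgn (a i \<bullet> y) = sgn (a i \<bullet> x)"
  proof
    fix i assume "i \<in> I"
    moreover have "sv a I y i = sv a I x i" using y by simp
    ultimately show "sgn (a i \<bullet> y) = sgn (a i \<bullet> x)" by (simp add: sv_def)
  qed
  have sz: "\<forall>i\<in>I. sgn (a i \<bullet> z) = sgn (a i \<bullet> x)"
  proof
    fix i assume "i \<in> I"
    moreover have "sv a I z i = sv a I x i" using z by simp
    ultimately show "sgn (a i \<bullet> z) = sgn (a i \<bullet> x)" by (simp add: sv_def)
  qed
  have yS: "y \<in> Sx a I UNIV" using Sx_transfer[OF UNIV_I assms sy] .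
  have "\<forall>i\<in>I. sgn (a i \<bullet> z) = sgn (a i \<bullet> y)" using sy sz by simp
  then have "\<forall>i\<in>I. sgn (a i \<bullet> (u *\<^sub>R y + v *\<^sub>R z)) = sgn (a i \<bullet> y)"
    using convex_sign[of I a y z u v] yS uv by (simp add: Sx_def)
  then have "sv a I (u *\<^sub>R y + v *\<^sub>R z) = sv a I y" by (rule sv_eqI)
  then show "u *\<^sub>R y + v *\<^sub>R z \<in> {y. sv a I y = sv a I x}" using y by simp
qed

lemma cell_component:
  fixes a :: "'i \<Rightarrow> 'a::euclidean_space"
  assumes "x \<in> Sx a I UNIV"
  shows "connected_component_set (Sx a I UNIV) x = {y. sv a I y = sv a I x}"
proof
  let ?S = "Sx a I UNIV"
  have sub: "connected_component_set ?S x \<subseteq> ?S" by (rule connected_component_subset)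
  have con: "connected (connected_component_set ?S x)" by (rule connected_connected_component)
  have xin: "x \<in> connected_component_set ?S x" using assms by simp
  show "connected_component_set ?S x \<subseteq> {y. sv a I y = sv a I x}"
  proof
    fix y assume y: "y \<in> connected_component_set ?S x"
    have "\<forall>i\<in>I. sgn (a i \<bullet> y) = sgn (a i \<bullet> x)"
    proof
      fix i assume i: "i \<in> I"
      have nx: "a i \<bullet> x \<noteq> 0" using assms i by (simp add: Sx_def)
      have ny: "a i \<bullet> y \<noteq> 0" using sub y i by (auto simp: Sx_def)
      show "sgn (a i \<bullet> y) = sgn (a i \<bullet> x)"
      proof (rule ccontr)
        assume ne: "sgn (a i \<bullet> y) \<noteq> sgn (a i \<bullet> x)"
        have "\<exists>z\<in>connected_component_set ?S x. a i \<bullet> z = 0"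
        proof (cases "a i \<bullet> x < 0")
          case True
          then have "a i \<bullet> y > 0" using ne ny by (auto simp: sgn_if split: if_splits)
          then show ?thesis using connected_ivt_hyperplane[OF con xin y, of "a i" 0] True by auto
        next
          case False
          then have "a i \<bullet> x > 0" using nx by auto
          moreover then have "a i \<bullet> y < 0" using ne ny by (auto simp: sgn_if split: if_splits)
          ultimately show ?thesis using connected_ivt_hyperplane[OF con y xin, of "a i" 0] by auto
        qed
        then obtain z where "z \<in> connected_component_set ?S x" "a i \<bullet> z = 0" by auto
        then show False using sub i by (auto simp: Sx_def)
      qed
    qed
    then show "y \<in> {y. sv a I y = sv a I x}" by (simp add: sv_eqI)
  qed
next
  let ?S = "Sx a I UNIV"
  show "{y. sv a I y = sv a I x} \<subseteq> connected_component_set ?S x"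
  proof (rule connected_component_maximal)
    show "x \<in> {y. sv a I y = sv a I x}" by simp
    show "connected {y. sv a I y = sv a I x}" by (rule convex_connected[OF cell_convex[OF assms]])
    show "{y. sv a I y = sv a I x} \<subseteq> ?S"
    proof
      fix y assume "y \<in> {y. sv a I y = sv a I x}"
      then have "\<forall>i\<in>I. sgn (a i \<bullet> y) = sgn (a i \<bullet> x)"
        by (intro sv_eqD) simp
      then show "y \<in> ?S" using Sx_transfer[OF UNIV_I assms] by blast
    qed
  qed
qed

lemma regions_cut_card:
  fixes Arr :: "(real^'n) set set" and a :: "(real^'n) set \<Rightarrow> real^'n"
  assumes "\<And>H. H \<in> Arr \<Longrightarrow> H = {x. a H \<bullet> x = 0}"
  shows "num_regions_cut Arr L = card (sv a Arr ` Sx a Arr L)"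
proof -
  let ?S = "Sx a Arr UNIV"
  let ?cell = "\<lambda>x. {y. sv a Arr y = sv a Arr x}"
  have S: "UNIV - \<Union>Arr = ?S" using assms by (auto simp: Sx_def)
  have reg: "regions Arr = ?cell ` ?S"
    unfolding regions_def S components_def using cell_component by (intro image_cong) auto
  have "{C \<in> regions Arr. C \<inter> L \<noteq> {}} = ?cell ` (?S \<inter> L)"
  proof (rule set_eqI, rule iffI)
    fix C assume "C \<in> {C \<in> regions Arr. C \<inter> L \<noteq> {}}"
    then obtain x y where x: "x \<in> ?S" "C = ?cell x" "y \<in> C" "y \<in> L" unfolding reg by auto
    then have "sv a Arr y = sv a Arr x" by simp
    then have "\<forall>i\<in>Arr. sgn (a i \<bullet> y) = sgn (a i \<bullet> x)"
      by (rule sv_eqD)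
    then have "y \<in> ?S" using Sx_transfer[OF UNIV_I x(1)] by blast
    moreover have "C = ?cell y" using x by auto
    ultimately show "C \<in> ?cell ` (?S \<inter> L)" using x(4) by blast
  next
    fix C assume "C \<in> ?cell ` (?S \<inter> L)"
    then obtain x where "x \<in> ?S" "x \<in> L" "C = ?cell x" by auto
    then show "C \<in> {C \<in> regions Arr. C \<inter> L \<noteq> {}}" unfolding reg by auto
  qed
  also have "?cell ` (?S \<inter> L) = (\<lambda>\<sigma>. {y. sv a Arr y = \<sigma>}) ` (sv a Arr ` (?S \<inter> L))"
    by (simp add: image_image)
  finally have eq: "{C \<in> regions Arr. C \<inter> L \<noteq> {}} = (\<lambda>\<sigma>. {y. sv a Arr y = \<sigma>}) ` (sv a Arr ` (?S \<inter> L))" .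
  have inj: "inj_on (\<lambda>\<sigma>. {y. sv a Arr y = \<sigma>}) (sv a Arr ` (?S \<inter> L))"
  proof (rule inj_onI)
    fix \<sigma> \<sigma>' assume "\<sigma> \<in> sv a Arr ` (?S \<inter> L)" "{y. sv a Arr y = \<sigma>} = {y. sv a Arr y = \<sigma>'}"
    then obtain x where "sv a Arr x = \<sigma>" "x \<in> {y. sv a Arr y = \<sigma>'}" by auto
    then show "\<sigma> = \<sigma>'" by simp
  qed
  have "?S \<inter> L = Sx a Arr L" by (auto simp: Sx_def)
  then show ?thesis unfolding num_regions_cut_def eq using card_image[OF inj] by simp
qed

lemma gp_rank:
  fixes Arr :: "(real^'n) set set"
  assumes "general_position Arr L d" "dim L = CARD('n) - d" "B \<subseteq> Arr"
  shows "dim L - dim (L \<inter> \<Inter>B) = min (CARD('n) - dim (\<Inter>B)) (CARD('n) - d)"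
proof (cases "B = {}")
  case True then show ?thesis by simp
next
  case False
  have "(\<Inter>H\<in>B. H \<inter> L) = L \<inter> \<Inter>B" using False by auto
  moreover have "dim (\<Inter>H\<in>B. H \<inter> L) = (if arr_rank B \<le> CARD('n) - d then CARD('n) - d - arr_rank B else 0)"
    using assms(1,3) False unfolding general_position_def by blast
  ultimately show ?thesis using assms(2) unfolding arr_rank_def by auto
qed

lemma finite_shyps: "finite (shyps :: (real^'n) set set)"
proof -
  have e: "shyps = (\<lambda>(i, j, e). hyp i j e) ` (UNIV \<times> UNIV \<times> {1, -1::real})"
    unfolding shyps_def by auto
  show ?thesis by (subst e) simp
qed

lemma hyp_normal: "hyp i j e = {x. (axis i 1 - e *\<^sub>R axis j 1) \<bullet> x = 0}"
  by (auto simp: hyp_def inner_diff_left inner_axis')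

lemma subspace_Inter_hyps:
  assumes "B \<subseteq> shyps"
  shows "subspace (\<Inter>B)"
proof (rule subspace_Inter, rule ballI)
  fix H assume "H \<in> B"
  then obtain i j e where "H = hyp i j e" using assms by (auto simp: shyps_def)
  then show "subspace H" by (simp add: hyp_normal subspace_hyperplane)
qed

definition Gs :: "nat \<Rightarrow> real set" where
  "Gs s = real_of_int ` {- int s..int s}"

lemma Gs_props: "finite (Gs s)" "0 \<in> Gs s" "\<And>g. g \<in> Gs s \<Longrightarrow> -g \<in> Gs s" "card (Gs s) = 2 * s + 1"
proof -
  show "finite (Gs s)" by (simp add: Gs_def)
  show "0 \<in> Gs s" unfolding Gs_def by (rule image_eqI[of _ _ 0]) auto
  show "-g \<in> Gs s" if "g \<in> Gs s" for g
    using that unfolding Gs_def by (force intro: image_eqI[of _ _ "- _"])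
  have "card (Gs s) = card {- int s..int s}" unfolding Gs_def by (rule card_image) (auto simp: inj_on_def)
  also have "\<dots> = 2 * s + 1" by simp
  finally show "card (Gs s) = 2 * s + 1" .
qed

lemma box_identity:
  fixes Arr :: "(real^'n) set set"
  assumes "Arr \<subseteq> shyps"
  shows "(\<Sum>B\<in>Pow Arr. (-1::int)^card B * (2 * int s + 1)^dim (\<Inter>B))
       = int (card ({x::real^'n. \<forall>k. x$k \<in> Gs s} - \<Union>Arr))"
proof -
  let ?X = "{x::real^'n. \<forall>k. x$k \<in> Gs s}"
  have finA: "finite Arr" using assms finite_shyps finite_subset by blast
  have finX: "finite ?X"
  proof -
    have "?X \<subseteq> vec_lambda ` PiE UNIV (\<lambda>_. Gs s)"
    proof
      fix x :: "real^'n" assume "x \<in> ?X"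
      then show "x \<in> vec_lambda ` PiE UNIV (\<lambda>_. Gs s)"
        by (intro image_eqI[of _ _ "vec_nth x"]) auto
    qed
    moreover have "finite (vec_lambda ` PiE UNIV (\<lambda>_. Gs s))" using Gs_props(1) by (simp add: finite_PiE)
    ultimately show ?thesis by (rule finite_subset)
  qed
  have "(2 * int s + 1)^dim (\<Inter>B) = int (card (?X \<inter> \<Inter>B))" if "B \<in> Pow Arr" for B
  proof -
    have sB: "B \<subseteq> shyps" using that assms by auto
    have fB: "finite B" using that finA finite_subset by auto
    obtain J where J: "struct (\<Inter>B) J" using struct_Inter[OF fB sB] by auto
    have "card (\<Inter>B \<inter> ?X) = card (Gs s) ^ card J"
      using struct_card[OF J Gs_props(1,2,3)] by simp
    moreover have "dim (\<Inter>B) = card J" using struct_dim[OF J subspace_Inter_hyps[OF sB]] .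
    ultimately show ?thesis using Gs_props(4) by (simp add: Int_commute add.commute)
  qed
  then have "(\<Sum>B\<in>Pow Arr. (-1::int)^card B * (2 * int s + 1)^dim (\<Inter>B))
      = (\<Sum>B\<in>Pow Arr. (-1::int)^card B * int (card (?X \<inter> \<Inter>B)))" by simp
  also have "\<dots> = int (card (?X - \<Union>Arr))" by (rule incl_excl[OF finA finX])
  finally show ?thesis .
qed


lemma main_generic:
  fixes Arr :: "(real^'n) set set" and P :: "nat poly" and Pi :: "int poly"
  assumes sub: "Arr \<subseteq> shyps" and L: "subspace L" "dim L = CARD('n) - d" "d \<le> CARD('n)"
    and gp: "general_position Arr L d"
    and natint: "\<And>x::nat. int (poly P x) = poly Pi (int x)"
    and deg: "degree Pi \<le> CARD('n)"
    and cnt: "\<And>s. int (card ({x::real^'n. \<forall>k. x$k \<in> Gs s} - \<Union>Arr)) = (-1)^CARD('n) * poly Pi (-(2 * int s + 1))"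
    and zero: "poly Pi (-1) = 0"
  shows "num_regions_cut Arr L = 2 * (\<Sum>k | k \<le> CARD('n) \<and> d < k \<and> odd (k - d). coeff P k)"
proof -
  define n where "n = CARD('n)"
  have finA: "finite Arr" using sub finite_shyps finite_subset by blast
  define a where "a H = (SOME v. H = {x. v \<bullet> x = 0})" for H :: "(real^'n) set"
  have norm: "H = {x. a H \<bullet> x = 0}" if HA: "H \<in> Arr" for H
  proof -
    have "H \<in> shyps" using HA sub by blast
    then obtain i j e where "H = hyp i j e" unfolding shyps_def by blast
    then have "\<exists>v. H = {x. v \<bullet> x = 0}" using hyp_normal by blast
    then show ?thesis unfolding a_def by (rule someI_ex)
  qed
  have Kr: "Kr a B = \<Inter>B" if "B \<subseteq> Arr" for B
  proof -
    have "\<forall>H\<in>B. H = {x. a H \<bullet> x = 0}" using norm that by auto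
    then show ?thesis unfolding Kr_def by blast
  qed
  have cP: "coeff Pi k = int (coeff P k)" for k by (rule natint_coeff[OF natint])
  have dimle: "dim (\<Inter>B) \<le> n" for B :: "(real^'n) set set"
    using dim_subset_UNIV[of "\<Inter>B"] by (simp add: n_def)
  have "int (num_regions_cut Arr L) = int (card (sv a Arr ` Sx a Arr L))"
    using regions_cut_card[of Arr a L] norm by simp
  also have "\<dots> = (\<Sum>B\<in>Pow Arr. (-1)^card B * (-1)^(dim L - dim (L \<inter> Kr a B)))"
    by (rule zaslavsky[OF finA L(1)])
  also have "\<dots> = (\<Sum>B\<in>Pow Arr. (-1)^card B * (-1)^min (n - dim (\<Inter>B)) (n - d))"
  proof (rule sum.cong[OF refl])
    fix B assume "B \<in> Pow Arr"
    then have "B \<subseteq> Arr" by simp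
    then show "(-1::int)^card B * (-1)^(dim L - dim (L \<inter> Kr a B)) = (-1)^card B * (-1)^min (n - dim (\<Inter>B)) (n - d)"
      using gp_rank[OF gp L(2)] Kr by (simp add: n_def)
  qed
  also have "\<dots> = (\<Sum>k\<in>{..n}. (\<Sum>B\<in>{B\<in>Pow Arr. dim (\<Inter>B) = k}. (-1)^card B * (-1)^min (n - dim (\<Inter>B)) (n - d)))"
    using finA dimle by (intro sum.group[symmetric]) auto
  also have "\<dots> = (\<Sum>k\<in>{..n}. (\<Sum>B\<in>Pow Arr. if dim (\<Inter>B) = k then (-1::int)^card B else 0) * (-1)^min (n - k) (n - d))"
  proof (rule sum.cong[OF refl])
    fix k
    have "(\<Sum>B\<in>{B\<in>Pow Arr. dim (\<Inter>B) = k}. (-1::int)^card B * (-1)^min (n - dim (\<Inter>B)) (n - d))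
        = (\<Sum>B\<in>{B\<in>Pow Arr. dim (\<Inter>B) = k}. (-1::int)^card B * (-1)^min (n - k) (n - d))"
      by (rule sum.cong) auto
    also have "\<dots> = (\<Sum>B\<in>{B\<in>Pow Arr. dim (\<Inter>B) = k}. (-1::int)^card B) * (-1)^min (n - k) (n - d)"
      by (simp add: sum_distrib_right)
    also have "(\<Sum>B\<in>{B\<in>Pow Arr. dim (\<Inter>B) = k}. (-1::int)^card B) = (\<Sum>B\<in>Pow Arr. if dim (\<Inter>B) = k then (-1::int)^card B else 0)"
      using finA by (intro sum.inter_filter) simp
    finally show "(\<Sum>B\<in>{B\<in>Pow Arr. dim (\<Inter>B) = k}. (-1::int)^card B * (-1)^min (n - dim (\<Inter>B)) (n - d))
        = (\<Sum>B\<in>Pow Arr. if dim (\<Inter>B) = k then (-1::int)^card B else 0) * (-1)^min (n - k) (n - d)" .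
  qed
  also have "\<dots> = (\<Sum>k\<le>n. (-1)^(n+k) * int (coeff P k) * (-1)^min (n - k) (n - d))"
  proof -
    define Q where "Q = (\<Sum>k\<le>n. monom ((-1)^(n+k) * coeff Pi k) k)"
    define Chi where "Chi = (\<Sum>B\<in>Pow Arr. monom ((-1::int)^card B) (dim (\<Inter>B)))"
    have polyQ: "poly Q x = (-1)^n * poly Pi (-x)" for x
    proof -
      have "poly Pi (-x) = (\<Sum>k\<le>n. coeff Pi k * (-x)^k)" using deg by (simp add: poly_bound n_def)
      then have "(-1)^n * poly Pi (-x) = (\<Sum>k\<le>n. (-1)^n * (coeff Pi k * (-x)^k))" by (simp add: sum_distrib_left)
      also have "\<dots> = (\<Sum>k\<le>n. (-1)^(n+k) * coeff Pi k * x^k)"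
        by (rule sum.cong[OF refl]) (simp add: power_minus[of x] power_add mult_ac)
      finally show ?thesis unfolding Q_def by (simp add: poly_sum poly_monom)
    qed
    have "Chi = Q"
    proof (rule poly_eqI_inj[of "\<lambda>s. 2 * int s + 1"])
      show "inj (\<lambda>s::nat. 2 * int s + 1)" by (auto simp: inj_def)
      fix s
      have "poly Chi (2 * int s + 1) = (\<Sum>B\<in>Pow Arr. (-1::int)^card B * (2 * int s + 1)^dim (\<Inter>B))"
        unfolding Chi_def by (simp add: poly_sum poly_monom)
      also have "\<dots> = int (card ({x::real^'n. \<forall>k. x$k \<in> Gs s} - \<Union>Arr))" by (rule box_identity[OF sub])
      also have "\<dots> = poly Q (2 * int s + 1)" using cnt polyQ by (simp add: n_def)
      finally show "poly Chi (2 * int s + 1) = poly Q (2 * int s + 1)" .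
    qed
    then have "coeff Chi k = coeff Q k" for k by simp
    then have w: "(\<Sum>B\<in>Pow Arr. if dim (\<Inter>B) = k then (-1::int)^card B else 0) = (if k \<le> n then (-1)^(n+k) * coeff Pi k else 0)" for k
      unfolding Chi_def Q_def coeff_sum_monom by simp
    show ?thesis using w cP by (intro sum.cong) auto
  qed
  finally have r: "int (num_regions_cut Arr L) = (\<Sum>k\<le>n. (-1)^(n+k) * int (coeff P k) * (-1)^min (n - k) (n - d))" .
  have z: "(\<Sum>k\<le>n. (-1)^k * int (coeff P k)) = 0"
  proof -
    have "poly Pi (-1) = (\<Sum>k\<le>n. coeff Pi k * (-1)^k)" using deg by (simp add: poly_bound n_def)
    then show ?thesis using zero cP by (simp add: mult.commute)
  qed
  have "int (num_regions_cut Arr L) = 2 * (\<Sum>k | k \<le> n \<and> d < k \<and> odd (k - d). int (coeff P k))"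
    unfolding r by (rule arith_final[OF _ z]) (use L(3) in \<open>simp add: n_def\<close>)
  also have "\<dots> = int (2 * (\<Sum>k | k \<le> n \<and> d < k \<and> odd (k - d). coeff P k))"
    by (simp only: of_nat_mult of_nat_sum of_nat_numeral)
  finally show ?thesis unfolding n_def by (simp only: of_nat_eq_iff)
qed

lemma memA: "(x::real^'n) \<in> \<Union>arrA \<longleftrightarrow> (\<exists>i j. i \<noteq> j \<and> x$j = x$i)"
proof
  assume "x \<in> \<Union>arrA" then show "\<exists>i j. i \<noteq> j \<and> x$j = x$i" unfolding arrA_def by (auto; metis)
next
  assume "\<exists>i j. i \<noteq> j \<and> x$j = x$i"
  then obtain i j where ij: "i \<noteq> j" "x$j = x$i" by auto
  have "{y::real^'n. y$j = y$i} \<in> arrA" unfolding arrA_def using ij(1) by blast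
  moreover have "x \<in> {y::real^'n. y$j = y$i}" using ij by simp
  ultimately show "x \<in> \<Union>arrA" by blast
qed
lemma memB: "(x::real^'n) \<in> \<Union>arrB \<longleftrightarrow> (\<exists>i j. i \<noteq> j \<and> (x$j = x$i \<or> x$j = - x$i)) \<or> (\<exists>k. x$k = 0)"
proof
  assume "x \<in> \<Union>arrB" then show "(\<exists>i j. i \<noteq> j \<and> (x$j = x$i \<or> x$j = - x$i)) \<or> (\<exists>k. x$k = 0)"
    unfolding arrB_def by (auto; metis)
next
  assume "(\<exists>i j. i \<noteq> j \<and> (x$j = x$i \<or> x$j = - x$i)) \<or> (\<exists>k. x$k = 0)"
  then consider i j where "i \<noteq> j" "x$j = x$i" | i j where "i \<noteq> j" "x$j = - x$i" | k where "x$k = 0" by auto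
  then show "x \<in> \<Union>arrB"
  proof cases
    case 1
    have "{y::real^'n. y$j = y$i} \<in> arrB" unfolding arrB_def using 1 by blast
    moreover have "x \<in> {y::real^'n. y$j = y$i}" using 1 by simp
    ultimately show ?thesis by blast
  next
    case 2
    have "{y::real^'n. y$j = - y$i} \<in> arrB" unfolding arrB_def using 2 by blast
    moreover have "x \<in> {y::real^'n. y$j = - y$i}" using 2 by simp
    ultimately show ?thesis by blast
  next
    case 3
    have "{y::real^'n. y$k = 0} \<in> arrB" unfolding arrB_def by blast
    moreover have "x \<in> {y::real^'n. y$k = 0}" using 3 by simp
    ultimately show ?thesis by blast
  qed
qed
lemma memD: "(x::real^'n) \<in> \<Union>arrD \<longleftrightarrow> (\<exists>i j. i \<noteq> j \<and> (x$j = x$i \<or> x$j = - x$i))"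
proof
  assume "x \<in> \<Union>arrD" then show "\<exists>i j. i \<noteq> j \<and> (x$j = x$i \<or> x$j = - x$i)"
    unfolding arrD_def by (auto; metis)
next
  assume "\<exists>i j. i \<noteq> j \<and> (x$j = x$i \<or> x$j = - x$i)"
  then consider i j where "i \<noteq> j" "x$j = x$i" | i j where "i \<noteq> j" "x$j = - x$i" by auto
  then show "x \<in> \<Union>arrD"
  proof cases
    case 1
    have "{y::real^'n. y$j = y$i} \<in> arrD" unfolding arrD_def using 1 by blast
    moreover have "x \<in> {y::real^'n. y$j = y$i}" using 1 by simp
    ultimately show ?thesis by blast
  next
    case 2
    have "{y::real^'n. y$j = - y$i} \<in> arrD" unfolding arrD_def using 2 by blast
    moreover have "x \<in> {y::real^'n. y$j = - y$i}" using 2 by simp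
    ultimately show ?thesis by blast
  qed
qed


lemma vec_Fset_card:
  fixes G0 :: "real set" and E :: "real \<Rightarrow> real set"
  shows "card {x::real^'n. (\<forall>k. x$k \<in> G0) \<and> (\<forall>i j. i \<noteq> j \<longrightarrow> x$j \<notin> E (x$i))} = card (Fset (UNIV::'n set) G0 E)"
proof -
  let ?X = "{x::real^'n. (\<forall>k. x$k \<in> G0) \<and> (\<forall>i j. i \<noteq> j \<longrightarrow> x$j \<notin> E (x$i))}"
  have "vec_nth ` ?X = Fset UNIV G0 E"
  proof (rule set_eqI, rule iffI)
    fix f :: "'n \<Rightarrow> real" assume "f \<in> vec_nth ` ?X" then show "f \<in> Fset UNIV G0 E" by (auto simp: Fset_def PiE_iff)
  next
    fix f :: "'n \<Rightarrow> real" assume f: "f \<in> Fset UNIV G0 E"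
    show "f \<in> vec_nth ` ?X"
    proof (rule image_eqI[of _ _ "vec_lambda f"])
      show "f = vec_nth (vec_lambda f)" by (rule ext) simp
      show "vec_lambda f \<in> ?X" using f by (auto simp: Fset_def PiE_iff)
    qed
  qed
  moreover have inj: "inj_on vec_nth ?X" by (auto simp: inj_on_def vec_eq_iff)
  ultimately show ?thesis using card_image[OF inj] by simp
qed

lemma prod_nat_int:
  assumes "c = m * i0" "0 < m"
  shows "int (\<Prod>i<n. c - m * i) = (\<Prod>i<n. int c - int m * int i)"
proof (cases "n \<le> i0")
  case True
  have "int (c - m * i) = int c - int m * int i" if "i < n" for i
  proof -
    have "m * i \<le> c" using that True assms by simp
    then show ?thesis by (simp add: of_nat_diff)
  qed
  then show ?thesis by (simp add: of_nat_prod)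
next
  case False
  then have i0: "i0 \<in> {..<n}" by simp
  have h1: "(\<Prod>i<n. c - m * i) = 0" using i0 assms(1) by (intro prod_zero) auto
  have h2: "(\<Prod>i<n. int c - int m * int i) = 0" using i0 assms(1) by (intro prod_zero) auto
  show ?thesis by (simp only: h1 h2 of_nat_0)
qed

lemma prod_neg_int: "(\<Prod>i<n. - f i) = (-1)^n * (\<Prod>i<n. (f i :: int))"
proof -
  have "(\<Prod>i<n. - f i) = (\<Prod>i<n. (-1) * f i)" by simp
  also have "\<dots> = (\<Prod>i<n. (-1::int)) * (\<Prod>i<n. f i)" by (rule prod.distrib)
  finally show ?thesis by simp
qed

lemma exA: "excl (Gs s) (\<lambda>w. {w}) 1"
  by unfold_locales (auto simp: Gs_props)

lemma exB: "excl (Gs s - {0}) (\<lambda>w. {w, -w}) 2"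
proof
  show "finite (Gs s - {0})" by (simp add: Gs_props)
  show "{w, -w} \<subseteq> Gs s - {0}" if "w \<in> Gs s - {0}" for w using that Gs_props(3) by auto
  show "card {w, -w} = 2" if "w \<in> Gs s - {0}" for w using that by auto
  show "w' \<in> {w, -w} \<longleftrightarrow> w \<in> {w', -w'}" for w w' :: real by auto
  show "{w, -w} \<inter> {w', -w'} = {}" if "w' \<notin> {w, -w}" for w w' :: real using that by auto
qed

lemma card_Gs0: "card (Gs s - {0}) = 2 * s"
  using Gs_props by (simp add: card_Diff_singleton)

lemma CARD_pos: "0 < CARD('n::finite)" by simp

lemma Bset_card:
  "card {x::real^'n. (\<forall>k. x$k \<in> Gs s - {0}) \<and> (\<forall>i j. i \<noteq> j \<longrightarrow> x$j \<notin> {x$i, -x$i})} = (\<Prod>i<CARD('n). 2 * s - 2 * i)"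
proof -
  have 1: "card {x::real^'n. (\<forall>k. x$k \<in> Gs s - {0}) \<and> (\<forall>i j. i \<noteq> j \<longrightarrow> x$j \<notin> {x$i, -x$i})}
      = card (Fset (UNIV::'n set) (Gs s - {0}) (\<lambda>w. {w, -w}))" by (rule vec_Fset_card)
  have 2: "card (Fset (UNIV::'n set) (Gs s - {0}) (\<lambda>w. {w, -w})) = (\<Prod>i<card (UNIV::'n set). card (Gs s - {0}) - 2 * i)"
    by (rule excl.Fset_card[OF exB]) simp
  show ?thesis unfolding 1 2 card_Gs0 by simp
qed

lemma cntA:
  "card ({x::real^'n. \<forall>k. x$k \<in> Gs s} - \<Union>arrA) = (\<Prod>i<CARD('n). 2 * s + 1 - 1 * i)"
proof -
  have "{x::real^'n. \<forall>k. x$k \<in> Gs s} - \<Union>arrA = {x. (\<forall>k. x$k \<in> Gs s) \<and> (\<forall>i j. i \<noteq> j \<longrightarrow> x$j \<notin> {x$i})}"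
    by (rule set_eqI) (simp only: Diff_iff mem_Collect_eq memA, auto)
  moreover have "card {x::real^'n. (\<forall>k. x$k \<in> Gs s) \<and> (\<forall>i j. i \<noteq> j \<longrightarrow> x$j \<notin> {x$i})}
      = card (Fset (UNIV::'n set) (Gs s) (\<lambda>w. {w}))" by (rule vec_Fset_card)
  moreover have "card (Fset (UNIV::'n set) (Gs s) (\<lambda>w. {w})) = (\<Prod>i<card (UNIV::'n set). card (Gs s) - 1 * i)"
    by (rule excl.Fset_card[OF exA]) simp
  ultimately show ?thesis by (simp only: Gs_props(4))
qed

lemma cntB:
  "card ({x::real^'n. \<forall>k. x$k \<in> Gs s} - \<Union>arrB) = (\<Prod>i<CARD('n). 2 * s - 2 * i)"
proof -
  have "{x::real^'n. \<forall>k. x$k \<in> Gs s} - \<Union>arrB = {x. (\<forall>k. x$k \<in> Gs s - {0}) \<and> (\<forall>i j. i \<noteq> j \<longrightarrow> x$j \<notin> {x$i, -x$i})}"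
    by (rule set_eqI) (simp only: Diff_iff mem_Collect_eq memB, auto)
  then show ?thesis using Bset_card by simp
qed

lemma cardZ:
  fixes k :: "'n::finite"
  shows "card {x::real^'n. (\<forall>i. x$i \<in> Gs s) \<and> (\<forall>i j. i \<noteq> j \<longrightarrow> x$j \<notin> {x$i, -x$i}) \<and> x$k = 0}
     = (\<Prod>i<CARD('n) - 1. 2 * s - 2 * i)"
proof -
  let ?Z = "{x::real^'n. (\<forall>i. x$i \<in> Gs s) \<and> (\<forall>i j. i \<noteq> j \<longrightarrow> x$j \<notin> {x$i, -x$i}) \<and> x$k = 0}"
  let ?f = "\<lambda>x::real^'n. restrict (vec_nth x) (UNIV - {k})"
  have img: "?f ` ?Z = Fset (UNIV - {k}) (Gs s - {0}) (\<lambda>w. {w, -w})"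
  proof (rule set_eqI, rule iffI)
    fix g assume "g \<in> ?f ` ?Z"
    then obtain x where x: "x \<in> ?Z" "g = ?f x" by auto
    have nz: "x$i \<noteq> 0" if "i \<noteq> k" for i
    proof
      assume xi: "x$i = 0"
      have all: "\<forall>i j. i \<noteq> j \<longrightarrow> x$j \<notin> {x$i, -x$i}" using x(1) by blast
      have "k \<noteq> i" using that by simp
      then have "x$i \<notin> {x$k, -x$k}" using spec[OF spec[OF all, of k], of i] by blast
      then show False using xi x(1) by simp
    qed
    show "g \<in> Fset (UNIV - {k}) (Gs s - {0}) (\<lambda>w. {w, -w})"
      using x nz unfolding Fset_def by (auto simp: PiE_iff)
  next
    fix g assume g: "g \<in> Fset (UNIV - {k}) (Gs s - {0}) (\<lambda>w. {w, -w})"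
    define x where "x = ((\<chi> i. if i = k then 0 else g i) :: real^'n)"
    have gk: "g k = undefined" using g by (auto simp: Fset_def PiE_iff extensional_def)
    have "x \<in> ?Z"
    proof -
      have "\<forall>i. x$i \<in> Gs s" using g Gs_props(2) by (auto simp: x_def Fset_def PiE_iff)
      moreover have "\<forall>i j. i \<noteq> j \<longrightarrow> x$j \<notin> {x$i, -x$i}"
      proof (intro allI impI)
        fix i j :: 'n assume ij: "i \<noteq> j"
        show "x$j \<notin> {x$i, -x$i}"
        proof (cases "i = k")
          case True
          then have "j \<noteq> k" using ij by simp
          then have "g j \<noteq> 0" using g by (auto simp: Fset_def PiE_iff)
          then show ?thesis using True \<open>j \<noteq> k\<close> by (simp add: x_def)
        next
          case False
          show ?thesis
          proof (cases "j = k")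
            case True
            have "g i \<noteq> 0" using g False by (auto simp: Fset_def PiE_iff)
            then show ?thesis using True False by (auto simp: x_def)
          next
            case False2: False
            then show ?thesis using g False ij by (auto simp: x_def Fset_def)
          qed
        qed
      qed
      moreover have "x$k = 0" by (simp add: x_def)
      ultimately show ?thesis by blast
    qed
    moreover have "?f x = g"
    proof
      fix i show "?f x i = g i" using gk by (auto simp: x_def)
    qed
    ultimately show "g \<in> ?f ` ?Z" by blast
  qed
  have inj: "inj_on ?f ?Z"
  proof (rule inj_onI)
    fix x y assume h: "x \<in> ?Z" "y \<in> ?Z" "?f x = ?f y"
    show "x = y"
    proof (rule vec_eq_iff[THEN iffD2], rule allI)
      fix i show "x$i = y$i"
      proof (cases "i = k")
        case True then show ?thesis using h by simp
      next
        case False then show ?thesis using fun_cong[OF h(3), of i] by simp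
      qed
    qed
  qed
  have "card ?Z = card (Fset (UNIV - {k}) (Gs s - {0}) (\<lambda>w. {w, -w}))"
    using card_image[OF inj] img by simp
  also have "\<dots> = (\<Prod>i<card (UNIV - {k} :: 'n set). card (Gs s - {0}) - 2 * i)"
    by (rule excl.Fset_card[OF exB]) simp
  finally show ?thesis by (simp add: card_Gs0)
qed

lemma cntD:
  "card ({x::real^'n. \<forall>k. x$k \<in> Gs s} - \<Union>arrD)
     = (\<Prod>i<CARD('n). 2 * s - 2 * i) + CARD('n) * (\<Prod>i<CARD('n) - 1. 2 * s - 2 * i)"
proof -
  let ?D = "{x::real^'n. (\<forall>i. x$i \<in> Gs s) \<and> (\<forall>i j. i \<noteq> j \<longrightarrow> x$j \<notin> {x$i, -x$i})}"
  let ?B = "{x::real^'n. (\<forall>k. x$k \<in> Gs s - {0}) \<and> (\<forall>i j. i \<noteq> j \<longrightarrow> x$j \<notin> {x$i, -x$i})}"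
  let ?Z = "\<lambda>k. {x::real^'n. (\<forall>i. x$i \<in> Gs s) \<and> (\<forall>i j. i \<noteq> j \<longrightarrow> x$j \<notin> {x$i, -x$i}) \<and> x$k = 0}"
  have e1: "{x::real^'n. \<forall>k. x$k \<in> Gs s} - \<Union>arrD = ?D"
    by (rule set_eqI) (simp only: Diff_iff mem_Collect_eq memD, auto)
  have e2: "?D = ?B \<union> (\<Union>k. ?Z k)" by auto
  have finD: "finite ?D"
  proof -
    have "?D \<subseteq> vec_lambda ` PiE UNIV (\<lambda>_. Gs s)"
    proof
      fix x :: "real^'n" assume "x \<in> ?D"
      then show "x \<in> vec_lambda ` PiE UNIV (\<lambda>_. Gs s)"
        by (intro image_eqI[of _ _ "vec_nth x"]) auto
    qed
    moreover have "finite (vec_lambda ` PiE UNIV (\<lambda>_. Gs s))" using Gs_props(1) by (simp add: finite_PiE)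
    ultimately show ?thesis by (rule finite_subset)
  qed
  have "card ?D = card ?B + card (\<Union>k. ?Z k)"
    unfolding e2 by (rule card_Un_disjoint) (use finD e2 in auto)
  also have "card (\<Union>k. ?Z k) = (\<Sum>k\<in>UNIV. card (?Z k))"
  proof (rule card_UN_disjoint)
    show "finite (UNIV :: 'n set)" by simp
    show "\<forall>k\<in>UNIV. finite (?Z k)" using finD by (auto intro: finite_subset[of _ ?D])
    show "\<forall>i\<in>UNIV. \<forall>j\<in>UNIV. i \<noteq> j \<longrightarrow> ?Z i \<inter> ?Z j = {}"
    proof (intro ballI impI)
      fix i j :: 'n assume ij: "i \<noteq> j"
      show "?Z i \<inter> ?Z j = {}"
      proof (rule equals0I)
        fix x assume x: "x \<in> ?Z i \<inter> ?Z j"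
        then have all: "\<forall>i j. i \<noteq> j \<longrightarrow> x$j \<notin> {x$i, -x$i}" by blast
        have "x$j \<notin> {x$i, -x$i}" using spec[OF spec[OF all, of i], of j] ij by blast
        then show False using x by simp
      qed
    qed
  qed
  also have "\<dots> = (\<Sum>k\<in>(UNIV::'n set). (\<Prod>i<CARD('n) - 1. 2 * s - 2 * i))"
    by (rule sum.cong[OF refl]) (rule cardZ)
  also have "\<dots> = CARD('n) * (\<Prod>i<CARD('n) - 1. 2 * s - 2 * i)" by simp
  finally show ?thesis using e1 Bset_card by simp
qed


lemma arrA_shyps: "(arrA :: (real^'n) set set) \<subseteq> shyps"
proof
  fix H :: "(real^'n) set" assume "H \<in> arrA"
  then obtain i j where "H = {x. x$i = x$j}" unfolding arrA_def by auto
  then have "H = hyp i j 1" by (simp add: hyp_def)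
  then show "H \<in> shyps" unfolding shyps_def by blast
qed

lemma arrB_shyps: "(arrB :: (real^'n) set set) \<subseteq> shyps"
proof
  fix H :: "(real^'n) set" assume "H \<in> arrB"
  then consider i j where "H = {x. x$i = x$j}" | i j where "H = {x. x$i = - x$j}" | k where "H = {x. x$k = 0}"
    unfolding arrB_def by auto
  then show "H \<in> shyps"
  proof cases
    case 1 then have "H = hyp i j 1" by (simp add: hyp_def)
    then show ?thesis unfolding shyps_def by blast
  next
    case 2 then have "H = hyp i j (-1)" by (simp add: hyp_def)
    then show ?thesis unfolding shyps_def by blast
  next
    case 3 then have "H = hyp k k (-1)" by (auto simp: hyp_def)
    then show ?thesis unfolding shyps_def by blast
  qed
qed

lemma arrD_sub_B: "(arrD :: (real^'n) set set) \<subseteq> arrB"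
  unfolding arrB_def arrD_def by (rule Un_upper1)

lemma arrD_shyps: "(arrD :: (real^'n) set set) \<subseteq> shyps"
  using arrB_shyps arrD_sub_B by (rule subset_trans[rotated])


theorem thmA:
  fixes L :: "(real^'n) set"
  assumes "subspace L" "dim L = CARD('n) - d" "d \<le> CARD('n)" "general_position (arrA::(real^'n) set set) L d"
    "2 \<le> CARD('n)"
  shows "num_regions_cut arrA L = 2 * (\<Sum>k | k \<le> CARD('n) \<and> d < k \<and> odd (k - d). stirl1 CARD('n) k)"
proof -
  define n where "n = CARD('n)"
  define P where "P = (\<Prod>i<n. [:of_nat i, 1:] :: nat poly)"
  define Pi where "Pi = (\<Prod>i<n. [:int i, 1:] :: int poly)"
  have "num_regions_cut (arrA::(real^'n) set set) L = 2 * (\<Sum>k | k \<le> CARD('n) \<and> d < k \<and> odd (k - d). coeff P k)"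
  proof (rule main_generic[OF arrA_shyps assms(1,2,3,4)])
    show "int (poly P x) = poly Pi (int x)" for x by (simp add: P_def Pi_def poly_prod of_nat_prod)
    have "degree Pi \<le> sum (degree \<circ> (\<lambda>i. [:int i, 1:])) {..<n}" unfolding Pi_def by (rule degree_prod_sum_le) simp
    then show "degree Pi \<le> CARD('n)" by (simp add: n_def)
    show "int (card ({x::real^'n. \<forall>k. x$k \<in> Gs s} - \<Union>arrA)) = (-1)^CARD('n) * poly Pi (-(2 * int s + 1))" for s
    proof -
      have "int (card ({x::real^'n. \<forall>k. x$k \<in> Gs s} - \<Union>arrA)) = (\<Prod>i<n. int (2 * s + 1) - int 1 * int i)"
        unfolding cntA n_def by (rule prod_nat_int) auto
      also have "\<dots> = (\<Prod>i<n. - (int i + (-(2 * int s + 1))))" by (intro prod.cong) auto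
      also have "\<dots> = (-1)^n * poly Pi (-(2 * int s + 1))" unfolding prod_neg_int Pi_def by (simp add: poly_prod)
      finally show ?thesis by (simp add: n_def)
    qed
    show "poly Pi (-1) = 0"
      unfolding Pi_def poly_prod using assms(5) by (intro prod_zero) (auto simp: n_def intro!: bexI[of _ 1])
  qed
  then show ?thesis unfolding stirl1_def P_def n_def by simp
qed

theorem thmB:
  fixes L :: "(real^'n) set"
  assumes "subspace L" "dim L = CARD('n) - d" "d \<le> CARD('n)" "general_position (arrB::(real^'n) set set) L d"
  shows "num_regions_cut arrB L = 2 * (\<Sum>k | k \<le> CARD('n) \<and> d < k \<and> odd (k - d). Bnum CARD('n) k)"
proof -
  define n where "n = CARD('n)"
  define P where "P = (\<Prod>i<n. [:2 * of_nat i + 1, 1:] :: nat poly)"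
  define Pi where "Pi = (\<Prod>i<n. [:2 * int i + 1, 1:] :: int poly)"
  have "num_regions_cut (arrB::(real^'n) set set) L = 2 * (\<Sum>k | k \<le> CARD('n) \<and> d < k \<and> odd (k - d). coeff P k)"
  proof (rule main_generic[OF arrB_shyps assms(1,2,3,4)])
    show "int (poly P x) = poly Pi (int x)" for x by (simp add: P_def Pi_def poly_prod of_nat_prod ac_simps)
    have "degree Pi \<le> sum (degree \<circ> (\<lambda>i. [:2 * int i + 1, 1:])) {..<n}" unfolding Pi_def by (rule degree_prod_sum_le) simp
    then show "degree Pi \<le> CARD('n)" by (simp add: n_def)
    show "int (card ({x::real^'n. \<forall>k. x$k \<in> Gs s} - \<Union>arrB)) = (-1)^CARD('n) * poly Pi (-(2 * int s + 1))" for s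
    proof -
      have "int (card ({x::real^'n. \<forall>k. x$k \<in> Gs s} - \<Union>arrB)) = (\<Prod>i<n. int (2 * s) - int 2 * int i)"
        unfolding cntB n_def by (rule prod_nat_int) auto
      also have "\<dots> = (\<Prod>i<n. - ((2 * int i + 1) + (-(2 * int s + 1))))" by (intro prod.cong) auto
      also have "\<dots> = (-1)^n * poly Pi (-(2 * int s + 1))" unfolding prod_neg_int Pi_def by (simp add: poly_prod)
      finally show ?thesis by (simp add: n_def)
    qed
    show "poly Pi (-1) = 0"
      unfolding Pi_def poly_prod by (intro prod_zero) (auto simp: n_def intro!: bexI[of _ 0])
  qed
  then show ?thesis unfolding Bnum_def P_def n_def by simp
qed

theorem thmD:
  fixes L :: "(real^'n) set"
  assumes "subspace L" "dim L = CARD('n) - d" "d \<le> CARD('n)" "general_position (arrD::(real^'n) set set) L d"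
    "2 \<le> CARD('n)"
  shows "num_regions_cut arrD L = 2 * (\<Sum>k | k \<le> CARD('n) \<and> d < k \<and> odd (k - d). Dnum CARD('n) k)"
proof -
  define n where "n = CARD('n)"
  define m where "m = n - 1"
  have nm: "n = Suc m" using assms(5) by (simp add: m_def n_def)
  define P where "P = ((\<Prod>i<n - 1. [:2 * of_nat i + 1, 1:]) * [:of_nat n - 1, 1:] :: nat poly)"
  define Pi where "Pi = ((\<Prod>i<n - 1. [:2 * int i + 1, 1:]) * [:int n - 1, 1:] :: int poly)"
  have "num_regions_cut (arrD::(real^'n) set set) L = 2 * (\<Sum>k | k \<le> CARD('n) \<and> d < k \<and> odd (k - d). coeff P k)"
  proof (rule main_generic[OF arrD_shyps assms(1,2,3,4)])
    show "int (poly P x) = poly Pi (int x)" for x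
      using nm by (simp add: P_def Pi_def poly_prod of_nat_prod ac_simps)
    have "degree Pi \<le> degree (\<Prod>i<n - 1. [:2 * int i + 1, 1:]) + degree [:int n - 1, 1:]"
      unfolding Pi_def by (rule degree_mult_le)
    also have "degree (\<Prod>i<n - 1. [:2 * int i + 1, 1:]) \<le> sum (degree \<circ> (\<lambda>i. [:2 * int i + 1, 1:])) {..<n - 1}"
      by (rule degree_prod_sum_le) simp
    finally show "degree Pi \<le> CARD('n)" using nm by (simp add: n_def)
    show "int (card ({x::real^'n. \<forall>k. x$k \<in> Gs s} - \<Union>arrD)) = (-1)^CARD('n) * poly Pi (-(2 * int s + 1))" for s
    proof -
      define B where "B = (\<Prod>i<m. int (2 * s) - int 2 * int i)"
      have b1: "int (\<Prod>i<m. 2 * s - 2 * i) = B" unfolding B_def by (rule prod_nat_int) auto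
      have b2: "int (\<Prod>i<n. 2 * s - 2 * i) = B * (int (2 * s) - 2 * int m)"
      proof -
        have "int (\<Prod>i<n. 2 * s - 2 * i) = (\<Prod>i<n. int (2 * s) - int 2 * int i)" by (rule prod_nat_int) auto
        also have "\<dots> = (\<Prod>i<Suc m. int (2 * s) - int 2 * int i)" by (simp only: nm)
        also have "\<dots> = B * (int (2 * s) - int 2 * int m)" unfolding B_def by (rule prod.lessThan_Suc)
        finally show ?thesis by simp
      qed
      have "int (card ({x::real^'n. \<forall>k. x$k \<in> Gs s} - \<Union>arrD))
          = int (\<Prod>i<n. 2 * s - 2 * i) + int n * int (\<Prod>i<m. 2 * s - 2 * i)"
        unfolding cntD by (simp add: n_def m_def)
      also have "\<dots> = B * (2 * int s - int m + 1)" unfolding b1 b2 by (simp add: nm algebra_simps)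
      also have "\<dots> = (-1)^n * poly Pi (-(2 * int s + 1))"
      proof -
        have "(\<Prod>i<m. (2 * int i + 1) + (-(2 * int s + 1))) = (\<Prod>i<m. - (int (2 * s) - int 2 * int i))"
          by (intro prod.cong) auto
        also have "\<dots> = (-1)^m * B" unfolding prod_neg_int B_def ..
        finally have h: "poly Pi (-(2 * int s + 1)) = (-1)^m * B * (int n - 1 + (-(2 * int s + 1)))"
          unfolding Pi_def nm by (simp add: poly_prod, simp add: algebra_simps)
        have e: "int n - 1 + (-(2 * int s + 1)) = int m - 2 * int s - 1" using nm by simp
        have sq: "(-1::int)^m * (-1)^m = 1" by (simp add: power_mult_distrib[symmetric])
        have "(-1)^n * poly Pi (-(2 * int s + 1)) = (-1)^(Suc m) * ((-1)^m * B * (int m - 2 * int s - 1))"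
          using h e nm by simp
        also have "\<dots> = - (((-1)^m * (-1)^m) * (B * (int m - 2 * int s - 1)))" by (simp only: power_Suc)
        also have "\<dots> = B * (2 * int s - int m + 1)" unfolding sq by algebra
        finally show ?thesis by simp
      qed
      finally show ?thesis by (simp add: n_def)
    qed
    have "poly (\<Prod>i<n - 1. [:2 * int i + 1, 1:]) (-1) = 0"
      unfolding poly_prod using assms(5) by (intro prod_zero) (auto simp: n_def intro!: bexI[of _ 0])
    then show "poly Pi (-1) = 0" unfolding Pi_def by simp
  qed
  then show ?thesis unfolding Dnum_def P_def n_def by simp
qed

theorem theorem3p4:
  fixes L :: "(real^'n) set" and d :: nat
  assumes "subspace L" and "dim L = CARD('n) - d" and "d \<le> CARD('n) - 1"
  shows "(general_position (arrA :: (real^'n) set set) L d \<and> 2 \<le> CARD('n) \<longrightarrow>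
            num_regions_cut arrA L
              = 2 * (\<Sum>k | k \<le> CARD('n) \<and> d < k \<and> odd (k - d). stirl1 CARD('n) k))
       \<and> (general_position (arrB :: (real^'n) set set) L d \<longrightarrow>
            num_regions_cut arrB L
              = 2 * (\<Sum>k | k \<le> CARD('n) \<and> d < k \<and> odd (k - d). Bnum CARD('n) k))
       \<and> (general_position (arrD :: (real^'n) set set) L d \<and> 2 \<le> CARD('n) \<longrightarrow>
            num_regions_cut arrD L
              = 2 * (\<Sum>k | k \<le> CARD('n) \<and> d < k \<and> odd (k - d). Dnum CARD('n) k))"
proof -
  have d: "d \<le> CARD('n)" using assms(3) by simp
  show ?thesis using thmA[OF assms(1,2) d] thmB[OF assms(1,2) d] thmD[OF assms(1,2) d] by blast
qed

end
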